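(* Let $d\ge2$, $\alpha\in(0,\infty)^d$, $N\in\mathbb Z_+$ and $0\le m\le N$. Then both sequences $$\left(\frac{m_{[n]}}{(|\alpha|+m)_{(n)}}\cdot\frac{(|\alpha|+N)_{(n)}}{N_{[n]}}\right)_{0\le n\le N}\qquad\text{and}\qquad\left(\frac{m_{[n]}}{(|\alpha|+m)_{(n)}}\right)_{0\le n\le N}$$ are $\alpha$-HPDS for $DM_\alpha(\cdot;N)$ (terms with $n>m$ vanish).
   Context: $N\Delta_{(d-1)}=\{r\in\mathbb Z^d_+:\sum r_i=N\}$, $|\alpha|=\sum\alpha_i$, $(c)_{(k)}=\Gamma(c+k)/\Gamma(c)$, $c_{[k]}=c(c-1)\cdots(c-k+1)$. $DM_\alpha(r;N)=\binom{N}{r}\prod(\alpha_i)_{(r_i)}/(|\alpha|)_{(N)}$. Hahn kernel $H^\alpha_n(r,s)=\sum_kP_k(r)P_k(s)$, $(P_k)$ an orthonormal basis in $L^2(DM_\alpha(\cdot;N))$ of the polynomials of degree $\le n$ orthogonal to all polynomials of lower degree. $(\rho_n)_{0\le n\le N}$ is an $\alpha$-HPDS for $DM_\alpha(\cdot;N)$ if $\rho_0=1$ and $\sum_{n=0}^N\rho_nH^\alpha_n(r,s)\ge0$ for all $r,s\in N\Delta_{(d-1)}$. *)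

theory Defs
  imports Complex_Main
begin

(* Points of N Delta_(d-1): functions nat => nat supported on {..<d} with coordinate sum N *)
definition simplex :: "nat \<Rightarrow> nat \<Rightarrow> (nat \<Rightarrow> nat) set" where
  "simplex d N = {r. (\<forall>i\<ge>d. r i = 0) \<and> (\<Sum>i<d. r i) = N}"

definition abs_alpha :: "nat \<Rightarrow> (nat \<Rightarrow> real) \<Rightarrow> real" where
  "abs_alpha d \<alpha> = (\<Sum>i<d. \<alpha> i)"

definition falling :: "real \<Rightarrow> nat \<Rightarrow> real" where
  "falling c k = (\<Prod>i<k. c - real i)"

(* Dirichlet-multinomial DM_alpha(r;N); rising factorial (c)_(k) = pochhammer c k *)
definition DM :: "nat \<Rightarrow> (nat \<Rightarrow> real) \<Rightarrow> nat \<Rightarrow> (nat \<Rightarrow> nat) \<Rightarrow> real" where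
  "DM d \<alpha> N r = (fact N / (\<Prod>i<d. fact (r i))) * (\<Prod>i<d. pochhammer (\<alpha> i) (r i))
                  / pochhammer (abs_alpha d \<alpha>) N"

definition ip :: "nat \<Rightarrow> (nat \<Rightarrow> real) \<Rightarrow> nat \<Rightarrow> ((nat \<Rightarrow> nat) \<Rightarrow> real) \<Rightarrow> ((nat \<Rightarrow> nat) \<Rightarrow> real) \<Rightarrow> real" where
  "ip d \<alpha> N f g = (\<Sum>r\<in>simplex d N. DM d \<alpha> N r * f r * g r)"

definition mons :: "nat \<Rightarrow> nat \<Rightarrow> (nat \<Rightarrow> nat) set" where
  "mons d n = {a. (\<forall>i\<ge>d. a i = 0) \<and> (\<Sum>i<d. a i) \<le> n}"

(* (restrictions to the simplex of) real polynomials of total degree <= n in d variables *)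
definition polys :: "nat \<Rightarrow> nat \<Rightarrow> nat \<Rightarrow> ((nat \<Rightarrow> nat) \<Rightarrow> real) set" where
  "polys d N n = {f. \<exists>c. \<forall>r\<in>simplex d N.
      f r = (\<Sum>a\<in>mons d n. c a * (\<Prod>i<d. real (r i) ^ a i))}"

definition orth_polys :: "nat \<Rightarrow> (nat \<Rightarrow> real) \<Rightarrow> nat \<Rightarrow> nat \<Rightarrow> ((nat \<Rightarrow> nat) \<Rightarrow> real) set" where
  "orth_polys d \<alpha> N n = {f \<in> polys d N n. \<forall>m<n. \<forall>g\<in>polys d N m. ip d \<alpha> N f g = 0}"

definition is_onb :: "nat \<Rightarrow> (nat \<Rightarrow> real) \<Rightarrow> nat \<Rightarrow> nat \<Rightarrow> ((nat \<Rightarrow> nat) \<Rightarrow> real) list \<Rightarrow> bool" where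
  "is_onb d \<alpha> N n Ps \<longleftrightarrow>
     (\<forall>p\<in>set Ps. p \<in> orth_polys d \<alpha> N n) \<and>
     (\<forall>j<length Ps. \<forall>k<length Ps. ip d \<alpha> N (Ps!j) (Ps!k) = (if j = k then 1 else 0)) \<and>
     (\<forall>f\<in>orth_polys d \<alpha> N n. \<exists>c. \<forall>r\<in>simplex d N. f r = (\<Sum>k<length Ps. c k * (Ps!k) r))"

(* Hahn kernel H^alpha_n(r,s) = sum_k P_k(r) P_k(s) (independent of the chosen ONB) *)
definition hahn_kernel :: "nat \<Rightarrow> (nat \<Rightarrow> real) \<Rightarrow> nat \<Rightarrow> nat \<Rightarrow> (nat \<Rightarrow> nat) \<Rightarrow> (nat \<Rightarrow> nat) \<Rightarrow> real" where
  "hahn_kernel d \<alpha> N n r s =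
     (let Ps = (SOME Ps. is_onb d \<alpha> N n Ps) in (\<Sum>k<length Ps. (Ps!k) r * (Ps!k) s))"

definition HPDS :: "nat \<Rightarrow> (nat \<Rightarrow> real) \<Rightarrow> nat \<Rightarrow> (nat \<Rightarrow> real) \<Rightarrow> bool" where
  "HPDS d \<alpha> N \<rho> \<longleftrightarrow> \<rho> 0 = 1 \<and>
     (\<forall>r\<in>simplex d N. \<forall>s\<in>simplex d N. (\<Sum>n\<le>N. \<rho> n * hahn_kernel d \<alpha> N n r s) \<ge> 0)"

end

theory Submission
  imports Defs "HOL-Library.FuncSet"
begin

lemma finite_supp_bounded: "finite {a::nat\<Rightarrow>nat. (\<forall>i\<ge>d. a i = 0) \<and> (\<forall>i<d. a i \<le> n)}"
proof -
  have "{a::nat\<Rightarrow>nat. (\<forall>i\<ge>d. a i = 0) \<and> (\<forall>i<d. a i \<le> n)}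
        \<subseteq> (\<lambda>f i. if i < d then f i else 0) ` (PiE {..<d} (\<lambda>_. {..n}))"
  proof
    fix a :: "nat\<Rightarrow>nat" assume a: "a \<in> {a. (\<forall>i\<ge>d. a i = 0) \<and> (\<forall>i<d. a i \<le> n)}"
    let ?f = "restrict a {..<d}"
    have "?f \<in> PiE {..<d} (\<lambda>_. {..n})" using a by auto
    moreover have "a = (\<lambda>i. if i < d then ?f i else 0)" using a by (auto simp: fun_eq_iff)
    ultimately show "a \<in> (\<lambda>f i. if i < d then f i else 0) ` (PiE {..<d} (\<lambda>_. {..n}))" by blast
  qed
  moreover have "finite (PiE {..<d} (\<lambda>_. {..n::nat}))" by (rule finite_PiE) auto
  ultimately show ?thesis using finite_subset by blast
qed

lemma finite_simplex: "finite (simplex d N)"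
proof -
  have "simplex d N \<subseteq> {a. (\<forall>i\<ge>d. a i = 0) \<and> (\<forall>i<d. a i \<le> N)}"
  proof
    fix r assume r: "r \<in> simplex d N"
    have "\<forall>i<d. r i \<le> N"
    proof (intro allI impI)
      fix i assume "i < d"
      then have "r i \<le> (\<Sum>j<d. r j)" by (intro member_le_sum) auto
      then show "r i \<le> N" using r by (simp add: simplex_def)
    qed
    then show "r \<in> {a. (\<forall>i\<ge>d. a i = 0) \<and> (\<forall>i<d. a i \<le> N)}" using r by (simp add: simplex_def)
  qed
  then show ?thesis using finite_subset finite_supp_bounded by blast
qed

lemma finite_mons: "finite (mons d n)"
proof -
  have "mons d n \<subseteq> {a. (\<forall>i\<ge>d. a i = 0) \<and> (\<forall>i<d. a i \<le> n)}"
  proof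
    fix r assume r: "r \<in> mons d n"
    have "\<forall>i<d. r i \<le> n"
    proof (intro allI impI)
      fix i assume "i < d"
      then have "r i \<le> (\<Sum>j<d. r j)" by (intro member_le_sum) auto
      then show "r i \<le> n" using r by (simp add: mons_def)
    qed
    then show "r \<in> {a. (\<forall>i\<ge>d. a i = 0) \<and> (\<forall>i<d. a i \<le> n)}" using r by (simp add: mons_def)
  qed
  then show ?thesis using finite_subset finite_supp_bounded by blast
qed

locale hs =
  fixes d :: nat and \<alpha> :: "nat \<Rightarrow> real"
  assumes dpos: "0 < d" and apos: "\<And>i. i < d \<Longrightarrow> 0 < \<alpha> i"
begin

abbreviation "S j \<equiv> simplex d j"
abbreviation "AA \<equiv> abs_alpha d \<alpha>"

lemma AA_pos: "0 < AA"
  unfolding abs_alpha_def using dpos apos by (intro sum_pos) auto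

lemma w_pos: assumes "r \<in> S j" shows "0 < DM d \<alpha> j r"
proof -
  have a: "0 < (\<Prod>i<d. pochhammer (\<alpha> i) (r i))"
    using apos by (intro prod_pos) (auto intro: pochhammer_pos)
  have b: "0 < pochhammer AA j" using AA_pos by (rule pochhammer_pos)
  have c: "0 < (\<Prod>i<d. fact (r i) :: real)" by (rule prod_pos) simp
  have e: "0 < (fact j :: real)" by simp
  show ?thesis unfolding DM_def using a b c e by simp
qed

lemma ip_sym: "ip d \<alpha> j f g = ip d \<alpha> j g f"
  unfolding ip_def by (simp add: ac_simps)

lemma ip_cong: assumes "\<forall>r\<in>S j. f r = f' r" "\<forall>r\<in>S j. g r = g' r"
  shows "ip d \<alpha> j f g = ip d \<alpha> j f' g'"
  unfolding ip_def using assms by (intro sum.cong) auto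

lemma ip_sum: "ip d \<alpha> j (\<lambda>r. \<Sum>x\<in>X. c x * f x r) g = (\<Sum>x\<in>X. c x * ip d \<alpha> j (f x) g)"
  unfolding ip_def
  by (simp add: sum_distrib_left sum_distrib_right sum.swap[of _ X] ac_simps)

lemma ip_lin: "ip d \<alpha> j (\<lambda>r. a * f r + b * g r) h = a * ip d \<alpha> j f h + b * ip d \<alpha> j g h"
  unfolding ip_def by (simp add: algebra_simps sum.distrib sum_distrib_left)

lemma w_sq_nonneg: "r \<in> S j \<Longrightarrow> 0 \<le> DM d \<alpha> j r * f r * f r"
  using w_pos[of r j] by (simp add: mult.assoc)

lemma ip_nonneg: "0 \<le> ip d \<alpha> j f f"
  unfolding ip_def using w_sq_nonneg by (intro sum_nonneg) auto

lemma ip_zero: assumes "ip d \<alpha> j f f = 0" shows "\<forall>r\<in>S j. f r = 0"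
proof
  fix r assume r: "r \<in> S j"
  have "\<forall>x\<in>S j. DM d \<alpha> j x * f x * f x = 0"
    using assms sum_nonneg_eq_0_iff[OF finite_simplex, where f="\<lambda>x. DM d \<alpha> j x * f x * f x"] w_sq_nonneg
    unfolding ip_def by blast
  then have "DM d \<alpha> j r * (f r * f r) = 0" using r by (simp add: mult.assoc)
  then show "f r = 0" using w_pos[OF r] by simp
qed

definition spanset :: "nat \<Rightarrow> ('a \<Rightarrow> (nat\<Rightarrow>nat) \<Rightarrow> real) \<Rightarrow> 'a set \<Rightarrow> ((nat\<Rightarrow>nat) \<Rightarrow> real) set" where
  "spanset j B M = {f. \<exists>c. \<forall>r\<in>S j. f r = (\<Sum>a\<in>M. c a * B a r)}"

lemma spanset_cong: "f \<in> spanset j B M \<Longrightarrow> \<forall>r\<in>S j. g r = f r \<Longrightarrow> g \<in> spanset j B M"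
  unfolding spanset_def by auto

lemma spanset_mem: assumes "finite M" "a \<in> M" shows "B a \<in> spanset j B M"
proof -
  have "\<forall>r\<in>S j. B a r = (\<Sum>aa\<in>M. (if aa = a then 1 else 0) * B aa r)"
  proof
    fix r
    have "(\<Sum>aa\<in>M. (if aa = a then 1 else 0) * B aa r) = (\<Sum>aa\<in>M. if aa = a then B aa r else 0)"
      by (rule sum.cong) auto
    also have "\<dots> = B a r" using assms by (simp add: sum.delta')
    finally show "B a r = (\<Sum>aa\<in>M. (if aa = a then 1 else 0) * B aa r)" by simp
  qed
  then show ?thesis unfolding spanset_def by (intro CollectI exI[of _ "\<lambda>x. if x = a then 1 else 0"])
qed

lemma spanset_zero: "(\<lambda>r. 0) \<in> spanset j B M"
  unfolding spanset_def by (rule CollectI, rule exI[of _ "\<lambda>x. 0"]) simp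

lemma spanset_empty: "f \<in> spanset j B {} \<Longrightarrow> \<forall>r\<in>S j. f r = 0"
  unfolding spanset_def by auto

lemma spanset_sum:
  assumes "finite X" "\<forall>x\<in>X. g x \<in> spanset j B M"
  shows "(\<lambda>r. \<Sum>x\<in>X. c x * g x r) \<in> spanset j B M"
proof -
  from assms(2) obtain C where C: "\<forall>x\<in>X. \<forall>r\<in>S j. g x r = (\<Sum>a\<in>M. C x a * B a r)"
    unfolding spanset_def by (auto dest!: bchoice)
  have "\<forall>r\<in>S j. (\<Sum>x\<in>X. c x * g x r) = (\<Sum>a\<in>M. (\<Sum>x\<in>X. c x * C x a) * B a r)"
    using C by (auto simp: sum_distrib_left sum_distrib_right sum.swap[of _ X] ac_simps intro!: sum.cong)
  then show ?thesis unfolding spanset_def by (intro CollectI exI[of _ "\<lambda>a. \<Sum>x\<in>X. c x * C x a"]) simp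
qed

lemma spanset_lin:
  assumes "f \<in> spanset j B M" "g \<in> spanset j B M"
  shows "(\<lambda>r. a * f r + b * g r) \<in> spanset j B M"
proof -
  have "(\<lambda>r. \<Sum>x\<in>{True,False}. (if x then a else b) * (if x then f else g) r) \<in> spanset j B M"
    using assms by (intro spanset_sum) auto
  then show ?thesis by simp
qed

lemma spanset_mono:
  assumes "M \<subseteq> M'" "finite M'" "f \<in> spanset j B M"
  shows "f \<in> spanset j B M'"
proof -
  from assms(3) obtain c where c: "\<forall>r\<in>S j. f r = (\<Sum>a\<in>M. c a * B a r)" unfolding spanset_def by auto
  have "\<forall>r\<in>S j. f r = (\<Sum>a\<in>M'. (if a \<in> M then c a else 0) * B a r)"
  proof
    fix r assume r: "r \<in> S j"
    have "(\<Sum>a\<in>M'. (if a \<in> M then c a else 0) * B a r) = (\<Sum>a\<in>M'. (if a \<in> M then c a * B a r else 0))"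
      by (intro sum.cong) auto
    also have "\<dots> = (\<Sum>a\<in>M' \<inter> M. c a * B a r)" using assms(2) by (simp add: sum.inter_restrict)
    also have "M' \<inter> M = M" using assms(1) by auto
    finally show "f r = (\<Sum>a\<in>M'. (if a \<in> M then c a else 0) * B a r)" using c r by simp
  qed
  then show ?thesis unfolding spanset_def by (intro CollectI exI[of _ "\<lambda>a. if a \<in> M then c a else 0"])
qed

lemma spanset_trans:
  assumes "finite M" "\<forall>a\<in>M. B a \<in> spanset j B' M'" "f \<in> spanset j B M"
  shows "f \<in> spanset j B' M'"
proof -
  from assms(3) obtain c where c: "\<forall>r\<in>S j. f r = (\<Sum>a\<in>M. c a * B a r)" unfolding spanset_def by auto
  have "(\<lambda>r. \<Sum>a\<in>M. c a * B a r) \<in> spanset j B' M'" using assms by (intro spanset_sum) auto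
  then show ?thesis using c spanset_cong by blast
qed

end

context hs begin

lemma ip_scale: "ip d \<alpha> j (\<lambda>r. a * f r) g = a * ip d \<alpha> j f g"
  unfolding ip_def by (simp add: sum_distrib_left ac_simps)

lemma spanset_cong_B: "\<forall>a\<in>M. B a = B' a \<Longrightarrow> spanset j B M = spanset j B' M"
  unfolding spanset_def by (auto intro!: sum.cong)

abbreviation lspan :: "nat \<Rightarrow> ((nat\<Rightarrow>nat)\<Rightarrow>real) list \<Rightarrow> ((nat\<Rightarrow>nat)\<Rightarrow>real) set" where
  "lspan j B \<equiv> spanset j (\<lambda>k. B!k) {..<length B}"

definition orthonormal :: "nat \<Rightarrow> ((nat\<Rightarrow>nat)\<Rightarrow>real) list \<Rightarrow> bool" where
  "orthonormal j B \<longleftrightarrow> (\<forall>k<length B. \<forall>l<length B. ip d \<alpha> j (B!k) (B!l) = (if k = l then 1 else 0))"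

definition subsp :: "((nat\<Rightarrow>nat)\<Rightarrow>real) set \<Rightarrow> bool" where
  "subsp W \<longleftrightarrow> (\<lambda>r. 0) \<in> W \<and> (\<forall>f\<in>W. \<forall>g\<in>W. \<forall>a b. (\<lambda>r. a * f r + b * g r) \<in> W)"

lemma subsp_sum:
  assumes "subsp W" "finite X" "\<forall>x\<in>X. g x \<in> W"
  shows "(\<lambda>r. \<Sum>x\<in>X. c x * g x r) \<in> W"
  using assms(2,3)
proof (induction X rule: finite_induct)
  case empty
  have "(\<lambda>r. 0) \<in> W" using assms(1) unfolding subsp_def by (rule conjunct1)
  then show ?case by simp
next
  case (insert x F)
  have cl: "\<forall>f\<in>W. \<forall>g\<in>W. \<forall>a b. (\<lambda>r. a * f r + b * g r) \<in> W" using assms(1) unfolding subsp_def by (rule conjunct2)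
  have h1: "g x \<in> W" using insert.prems by simp
  have h2: "(\<lambda>r. \<Sum>x\<in>F. c x * g x r) \<in> W" using insert.IH insert.prems by simp
  have "(\<lambda>r. c x * g x r + 1 * (\<Sum>x\<in>F. c x * g x r)) \<in> W"
    by (rule cl[rule_format, OF h1 h2])
  moreover have "(\<lambda>r. \<Sum>x\<in>insert x F. c x * g x r) = (\<lambda>r. c x * g x r + 1 * (\<Sum>x\<in>F. c x * g x r))"
    using insert.hyps by simp
  ultimately show ?case by simp
qed


lemma subsp_lin: assumes "subsp W" "f \<in> W" "g \<in> W" shows "(\<lambda>r. a * f r + b * g r) \<in> W"
proof -
  have cl: "\<forall>f\<in>W. \<forall>g\<in>W. \<forall>a b. (\<lambda>r. a * f r + b * g r) \<in> W"
    using assms(1) unfolding subsp_def by (rule conjunct2)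
  from cl[rule_format, OF assms(2) assms(3)] show ?thesis .
qed

lemma subsp_scale: assumes "subsp W" "f \<in> W" shows "(\<lambda>r. a * f r) \<in> W"
proof -
  have "(\<lambda>r. a * f r + 0 * f r) \<in> W" by (rule subsp_lin[OF assms assms(2)])
  then show ?thesis by simp
qed

lemma lspan_append: assumes "f \<in> lspan j B" shows "f \<in> lspan j (B @ C)"
proof -
  have e: "spanset j (\<lambda>k. B!k) {..<length B} = spanset j (\<lambda>k. (B@C)!k) {..<length B}"
    by (rule spanset_cong_B) (simp add: nth_append)
  have 1: "f \<in> spanset j (\<lambda>k. (B@C)!k) {..<length B}" using assms unfolding e .
  have 2: "{..<length B} \<subseteq> {..<length (B@C)}" by simp
  show ?thesis by (rule spanset_mono[OF 2 _ 1]) simp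
qed

lemma onb_coeff:
  assumes "orthonormal j B" "\<forall>r\<in>S j. f r = (\<Sum>k<length B. c k * (B!k) r)" "l < length B"
  shows "ip d \<alpha> j f (B!l) = c l"
proof -
  have "ip d \<alpha> j f (B!l) = ip d \<alpha> j (\<lambda>r. \<Sum>k<length B. c k * (B!k) r) (B!l)"
    using assms(2) by (intro ip_cong) auto
  also have "\<dots> = (\<Sum>k<length B. c k * ip d \<alpha> j (B!k) (B!l))" by (rule ip_sum)
  also have "\<dots> = (\<Sum>k<length B. if k = l then c k else 0)"
    using assms(1,3) unfolding orthonormal_def by (intro sum.cong) auto
  also have "\<dots> = c l" using assms(3) by (simp add: sum.delta')
  finally show ?thesis .
qed

end

context hs begin

lemma GS:
  assumes W: "subsp W"
  shows "set L \<subseteq> W \<Longrightarrow> \<exists>B. set B \<subseteq> W \<and> orthonormal j B \<and> set L \<subseteq> lspan j B"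
proof (induction L)
  case Nil
  show ?case by (rule exI[of _ "[]"]) (simp add: orthonormal_def)
next
  case (Cons l L)
  then obtain B where BW: "set B \<subseteq> W" and Bo: "orthonormal j B" and BL: "set L \<subseteq> lspan j B" by auto
  have lW: "l \<in> W" using Cons.prems by simp
  define p where "p = (\<lambda>r. \<Sum>k<length B. ip d \<alpha> j l (B!k) * (B!k) r)"
  define v where "v = (\<lambda>r. 1 * l r + (-1) * p r)"
  have pW: "p \<in> W" unfolding p_def 
    by (rule subsp_sum[OF W]) (use BW in auto)
  have vW: "v \<in> W" unfolding v_def by (rule subsp_lin[OF W lW pW])
  have pB: "ip d \<alpha> j p (B!k) = ip d \<alpha> j l (B!k)" if "k < length B" for k
    unfolding p_def by (rule onb_coeff[OF Bo _ that]) simp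
  have vorth: "ip d \<alpha> j v (B!k) = 0" if "k < length B" for k
    unfolding v_def ip_lin using pB[OF that] by simp
  have pspan: "p \<in> lspan j B" unfolding p_def
    by (rule spanset_sum) (auto intro: spanset_mem)
  show ?case
  proof (cases "ip d \<alpha> j v v = 0")
    case True
    then have "\<forall>r\<in>S j. v r = 0" by (rule ip_zero)
    then have "\<forall>r\<in>S j. l r = p r" unfolding v_def by simp
    then have "l \<in> lspan j B" by (rule spanset_cong[OF pspan])
    then have "set (l#L) \<subseteq> lspan j B" using BL by simp
    then show ?thesis using BW Bo by blast
  next
    case False
    then have vpos: "0 < ip d \<alpha> j v v" using ip_nonneg[of j v] by simp
    define nv where "nv = sqrt (ip d \<alpha> j v v)"
    have nvpos: "0 < nv" unfolding nv_def using vpos by simp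
    define u where "u = (\<lambda>r. (1/nv) * v r)"
    have uW: "u \<in> W" unfolding u_def by (rule subsp_scale[OF W vW])
    define B' where "B' = B @ [u]"
    have uorth: "ip d \<alpha> j u (B!k) = 0" if "k < length B" for k
      unfolding u_def ip_scale using vorth[OF that] by simp
    have uu: "ip d \<alpha> j u u = 1"
    proof -
      have "ip d \<alpha> j u u = (1/nv) * ip d \<alpha> j v u" unfolding u_def ip_scale ..
      also have "ip d \<alpha> j v u = ip d \<alpha> j u v" by (rule ip_sym)
      also have "\<dots> = (1/nv) * ip d \<alpha> j v v" unfolding u_def ip_scale ..
      finally have "ip d \<alpha> j u u = ip d \<alpha> j v v / nv^2" by (simp add: power2_eq_square)
      also have "nv^2 = ip d \<alpha> j v v" unfolding nv_def using vpos by simp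
      finally show ?thesis using vpos by simp
    qed
    have B'o: "orthonormal j B'"
      unfolding orthonormal_def
    proof (intro allI impI)
      fix k l assume k: "k < length B'" and l: "l < length B'"
      show "ip d \<alpha> j (B'!k) (B'!l) = (if k = l then 1 else 0)"
      proof (cases "k < length B")
        case kB: True
        show ?thesis
        proof (cases "l < length B")
          case True then show ?thesis using kB Bo unfolding B'_def orthonormal_def by (simp add: nth_append)
        next
          case False then have "l = length B" using l unfolding B'_def by simp
          then show ?thesis using kB uorth[OF kB] unfolding B'_def by (simp add: nth_append ip_sym[of j _ u])
        qed
      next
        case kB: False then have kk: "k = length B" using k unfolding B'_def by simp
        show ?thesis
        proof (cases "l < length B")
          case True then show ?thesis using kk uorth[OF True] unfolding B'_def by (simp add: nth_append)
        next
          case False then have "l = length B" using l unfolding B'_def by simp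
          then show ?thesis using kk uu unfolding B'_def by (simp add: nth_append)
        qed
      qed
    qed
    have B'W: "set B' \<subseteq> W" using BW uW unfolding B'_def by simp
    have LB': "set L \<subseteq> lspan j B'" using BL lspan_append unfolding B'_def by blast
    have p': "(\<lambda>r. \<Sum>k<length B. ip d \<alpha> j l (B!k) * (B'!k) r) \<in> lspan j B'"
      by (rule spanset_sum) (auto intro: spanset_mem simp: B'_def)
    have u': "u \<in> lspan j B'"
    proof -
      have "B'!(length B) \<in> lspan j B'" by (rule spanset_mem) (auto simp: B'_def)
      then show ?thesis unfolding B'_def by simp
    qed
    have lin: "(\<lambda>r. 1 * (\<Sum>k<length B. ip d \<alpha> j l (B!k) * (B'!k) r) + nv * u r) \<in> lspan j B'"
      by (rule spanset_lin[OF p' u'])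
    have "\<forall>r\<in>S j. l r = 1 * (\<Sum>k<length B. ip d \<alpha> j l (B!k) * (B'!k) r) + nv * u r"
    proof
      fix r
      have "(\<Sum>k<length B. ip d \<alpha> j l (B!k) * (B'!k) r) = p r"
        unfolding p_def B'_def by (intro sum.cong) (auto simp: nth_append)
      moreover have "nv * u r = v r" unfolding u_def using nvpos by simp
      ultimately show "l r = 1 * (\<Sum>k<length B. ip d \<alpha> j l (B!k) * (B'!k) r) + nv * u r"
        unfolding v_def by simp
    qed
    then have "l \<in> lspan j B'" by (rule spanset_cong[OF lin])
    then have "set (l#L) \<subseteq> lspan j B'" using LB' by simp
    then show ?thesis using B'W B'o by blast
  qed
qed

end

context hs begin

definition mon :: "(nat\<Rightarrow>nat) \<Rightarrow> (nat\<Rightarrow>nat) \<Rightarrow> real" where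
  "mon a r = (\<Prod>i<d. real (r i) ^ a i)"
definition ff :: "(nat\<Rightarrow>nat) \<Rightarrow> (nat\<Rightarrow>nat) \<Rightarrow> real" where
  "ff a r = (\<Prod>i<d. falling (real (r i)) (a i))"
definition monsl :: "nat \<Rightarrow> (nat\<Rightarrow>nat) set" where
  "monsl n = {a. (\<forall>i\<ge>d. a i = 0) \<and> (\<Sum>i<d. a i) < n}"

lemma polys_eq: "polys d j n = spanset j mon (mons d n)"
  unfolding polys_def spanset_def mon_def ..

lemma monsl_Suc: "monsl (Suc n) = mons d n"
  unfolding monsl_def mons_def by auto
lemma monsl_0: "monsl 0 = {}"
  unfolding monsl_def by auto
lemma finite_monsl: "finite (monsl n)"
  by (cases n) (simp_all add: monsl_Suc monsl_0 finite_mons)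

lemma mons_mono: "n \<le> m \<Longrightarrow> mons d n \<subseteq> mons d m"
  unfolding mons_def by auto

lemma falling_Suc: "falling c (Suc k) = falling c k * (c - real k)"
  unfolding falling_def by (simp add: prod.lessThan_Suc)

lemma falling_0[simp]: "falling c 0 = 1"
  unfolding falling_def by simp

lemma prod_upd: assumes "i < d"
  shows "(\<Prod>k<d. F k ((a(i:=x)) k)) = F i x * (\<Prod>k\<in>{..<d}-{i}. F k (a k))"
proof -
  have "(\<Prod>k<d. F k ((a(i:=x)) k)) = F i ((a(i:=x)) i) * (\<Prod>k\<in>{..<d}-{i}. F k ((a(i:=x)) k))"
    by (rule prod.remove) (use assms in auto)
  also have "(\<Prod>k\<in>{..<d}-{i}. F k ((a(i:=x)) k)) = (\<Prod>k\<in>{..<d}-{i}. F k (a k))"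
    by (rule prod.cong) auto
  finally show ?thesis by simp
qed

lemma prod_split: assumes "i < d"
  shows "(\<Prod>k<d. F k (a k)) = F i (a i) * (\<Prod>k\<in>{..<d}-{i}. F k (a k))"
  by (rule prod.remove) (use assms in auto)

lemma sum_upd: assumes "i < d"
  shows "(\<Sum>k<d. (a(i:=x)) k) = x + (\<Sum>k\<in>{..<d}-{i}. a k)"
proof -
  have "(\<Sum>k<d. (a(i:=x)) k) = (a(i:=x)) i + (\<Sum>k\<in>{..<d}-{i}. (a(i:=x)) k)"
    by (rule sum.remove) (use assms in auto)
  also have "(\<Sum>k\<in>{..<d}-{i}. (a(i:=x)) k) = (\<Sum>k\<in>{..<d}-{i}. a k)"
    by (rule sum.cong) auto
  finally show ?thesis by simp
qed

lemma sum_split: assumes "i < d"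
  shows "(\<Sum>k<d. a k) = a i + (\<Sum>k\<in>{..<d}-{i}. a k)"
  by (rule sum.remove) (use assms in auto)

lemma coord_mon: assumes "i < d" shows "real (r i) * mon a r = mon (a(i:= Suc (a i))) r"
proof -
  have "mon (a(i:= Suc (a i))) r = real (r i) ^ Suc (a i) * (\<Prod>k\<in>{..<d}-{i}. real (r k) ^ a k)"
    unfolding mon_def using prod_upd[OF assms, of "\<lambda>k e. real (r k) ^ e"] by simp
  moreover have "mon a r = real (r i) ^ a i * (\<Prod>k\<in>{..<d}-{i}. real (r k) ^ a k)"
    unfolding mon_def using prod_split[OF assms, of "\<lambda>k e. real (r k) ^ e"] by simp
  ultimately show ?thesis by simp
qed

lemma coord_ff: assumes "i < d"
  shows "real (r i) * ff a r = ff (a(i:= Suc (a i))) r + real (a i) * ff a r"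
proof -
  define R where "R = (\<Prod>k\<in>{..<d}-{i}. falling (real (r k)) (a k))"
  have 1: "ff (a(i:= Suc (a i))) r = falling (real (r i)) (Suc (a i)) * R"
    unfolding ff_def R_def using prod_upd[OF assms, of "\<lambda>k e. falling (real (r k)) e"] by simp
  have 2: "ff a r = falling (real (r i)) (a i) * R"
    unfolding ff_def R_def using prod_split[OF assms, of "\<lambda>k e. falling (real (r k)) e"] by simp
  show ?thesis unfolding 1 2 falling_Suc by (simp add: algebra_simps)
qed

lemma deg_upd: assumes "i < d" shows "(\<Sum>k<d. (a(i:=Suc (a i))) k) = Suc (\<Sum>k<d. a k)"
  using sum_upd[OF assms, of a "Suc (a i)"] sum_split[OF assms, of a] by simp

lemma mons_upd: assumes "a \<in> mons d n" "i < d" shows "a(i:=Suc (a i)) \<in> mons d (Suc n)"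
  using assms deg_upd[OF assms(2), of a] unfolding mons_def by auto

lemma coord_span_gen:
  assumes i: "i < d"
    and B: "\<forall>a\<in>mons d n. (\<lambda>r. real (r i) * B a r) \<in> spanset j B (mons d (Suc n))"
    and f: "f \<in> spanset j B (mons d n)"
  shows "(\<lambda>r. real (r i) * f r) \<in> spanset j B (mons d (Suc n))"
proof -
  from f obtain c where c: "\<forall>r\<in>S j. f r = (\<Sum>a\<in>mons d n. c a * B a r)" unfolding spanset_def by auto
  have h1: "(\<lambda>r. \<Sum>a\<in>mons d n. c a * (real (r i) * B a r)) \<in> spanset j B (mons d (Suc n))"
    using B by (intro spanset_sum[where g="\<lambda>a r. real (r i) * B a r"]) (auto simp: finite_mons)
  have h2: "\<forall>r\<in>S j. real (r i) * f r = (\<Sum>a\<in>mons d n. c a * (real (r i) * B a r))"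
    using c by (simp add: sum_distrib_left ac_simps)
  show ?thesis by (rule spanset_cong[OF h1]) (use h2 in simp)
qed

lemma coord_span_mon: assumes i: "i < d" and f: "f \<in> spanset j mon (mons d n)"
  shows "(\<lambda>r. real (r i) * f r) \<in> spanset j mon (mons d (Suc n))"
proof (rule coord_span_gen[OF i _ f])
  show "\<forall>a\<in>mons d n. (\<lambda>r. real (r i) * mon a r) \<in> spanset j mon (mons d (Suc n))"
  proof
    fix a assume a: "a \<in> mons d n"
    have "(\<lambda>r. real (r i) * mon a r) = mon (a(i:= Suc (a i)))" using i by (simp add: coord_mon fun_eq_iff)
    then show "(\<lambda>r. real (r i) * mon a r) \<in> spanset j mon (mons d (Suc n))"
      using mons_upd[OF a i] by (simp add: spanset_mem finite_mons)
  qed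
qed

lemma mons_Suc_sub: "mons d n \<subseteq> mons d (Suc n)" by (rule mons_mono) simp

lemma coord_span_ff: assumes i: "i < d" and f: "f \<in> spanset j ff (mons d n)"
  shows "(\<lambda>r. real (r i) * f r) \<in> spanset j ff (mons d (Suc n))"
proof (rule coord_span_gen[OF i _ f])
  show "\<forall>a\<in>mons d n. (\<lambda>r. real (r i) * ff a r) \<in> spanset j ff (mons d (Suc n))"
  proof
    fix a assume a: "a \<in> mons d n"
    have e: "(\<lambda>r. real (r i) * ff a r) = (\<lambda>r. 1 * ff (a(i:= Suc (a i))) r + real (a i) * ff a r)"
      using i by (simp add: coord_ff fun_eq_iff)
    have h1: "ff (a(i:= Suc (a i))) \<in> spanset j ff (mons d (Suc n))"
      using mons_upd[OF a i] by (simp add: spanset_mem finite_mons)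
    have h2: "ff a \<in> spanset j ff (mons d (Suc n))"
      using mons_Suc_sub a by (intro spanset_mem) (auto simp: finite_mons)
    show "(\<lambda>r. real (r i) * ff a r) \<in> spanset j ff (mons d (Suc n))"
      unfolding e by (rule spanset_lin[OF h1 h2])
  qed
qed

lemma mons0_eq: assumes "a \<in> mons d 0" shows "mon a = ff a"
proof -
  have "\<forall>i<d. a i = 0" using assms unfolding mons_def by simp
  then show ?thesis unfolding mon_def ff_def by (simp add: fun_eq_iff)
qed

lemma mons_dec:
  assumes a: "a \<in> mons d (Suc n)" and na: "a \<notin> mons d n"
  obtains i where "i < d" "a(i := a i - 1) \<in> mons d n" "a = (a(i := a i - 1))(i := Suc ((a(i := a i - 1)) i))"
proof -
  have deg: "(\<Sum>k<d. a k) = Suc n" using a na unfolding mons_def by auto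
  then obtain i where i: "i < d" "0 < a i"
    by (metis Suc_neq_Zero lessThan_iff neq0_conv sum.neutral)
  have "(\<Sum>k<d. (a(i := a i - 1)) k) = (a i - 1) + (\<Sum>k\<in>{..<d}-{i}. a k)" by (rule sum_upd[OF i(1)])
  moreover have "(\<Sum>k<d. a k) = a i + (\<Sum>k\<in>{..<d}-{i}. a k)" by (rule sum_split[OF i(1)])
  ultimately have "(\<Sum>k<d. (a(i := a i - 1)) k) = n" using deg i(2) by simp
  then have "a(i := a i - 1) \<in> mons d n" using a i unfolding mons_def by auto
  moreover have "a = (a(i := a i - 1))(i := Suc ((a(i := a i - 1)) i))" using i(2) by (simp add: fun_eq_iff)
  ultimately show ?thesis using that i(1) by blast
qed

lemma mon_in_ff: "\<forall>a\<in>mons d n. mon a \<in> spanset j ff (mons d n)"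
proof (induction n)
  case 0
  then show ?case using mons0_eq by (simp add: spanset_mem finite_mons)
next
  case (Suc n)
  show ?case
  proof
    fix a assume a: "a \<in> mons d (Suc n)"
    show "mon a \<in> spanset j ff (mons d (Suc n))"
    proof (cases "a \<in> mons d n")
      case True
      then show ?thesis using Suc.IH spanset_mono[OF mons_Suc_sub finite_mons] by blast
    next
      case False
      obtain i where i: "i < d" and a': "a(i := a i - 1) \<in> mons d n"
        and ae: "a = (a(i := a i - 1))(i := Suc ((a(i := a i - 1)) i))" using mons_dec[OF a False] by blast
      define b where "b = a(i := a i - 1)"
      have "(\<lambda>r. real (r i) * mon b r) \<in> spanset j ff (mons d (Suc n))"
        using coord_span_ff[OF i] Suc.IH a' unfolding b_def by blast
      moreover have "(\<lambda>r. real (r i) * mon b r) = mon a"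
        proof -
        have ae': "a = b(i:=Suc(b i))" using ae unfolding b_def .
        show ?thesis unfolding ae' using coord_mon[OF i] by (simp add: fun_eq_iff)
      qed
      ultimately show ?thesis by simp
    qed
  qed
qed

lemma ff_in_mon: "\<forall>a\<in>mons d n. ff a \<in> spanset j mon (mons d n)"
proof (induction n)
  case 0
  then show ?case using mons0_eq by (metis spanset_mem finite_mons)
next
  case (Suc n)
  show ?case
  proof
    fix a assume a: "a \<in> mons d (Suc n)"
    show "ff a \<in> spanset j mon (mons d (Suc n))"
    proof (cases "a \<in> mons d n")
      case True
      then show ?thesis using Suc.IH spanset_mono[OF mons_Suc_sub finite_mons] by blast
    next
      case False
      obtain i where i: "i < d" and a': "a(i := a i - 1) \<in> mons d n"
        and ae: "a = (a(i := a i - 1))(i := Suc ((a(i := a i - 1)) i))" using mons_dec[OF a False] by blast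
      define b where "b = a(i := a i - 1)"
      have h1: "(\<lambda>r. real (r i) * ff b r) \<in> spanset j mon (mons d (Suc n))"
        using coord_span_mon[OF i] Suc.IH a' unfolding b_def by blast
      have h2: "ff b \<in> spanset j mon (mons d (Suc n))"
        using Suc.IH a' spanset_mono[OF mons_Suc_sub finite_mons] unfolding b_def by blast
      have "(\<lambda>r. 1 * (real (r i) * ff b r) + (- real (b i)) * ff b r) \<in> spanset j mon (mons d (Suc n))"
        by (rule spanset_lin[OF h1 h2])
      moreover have "(\<lambda>r. 1 * (real (r i) * ff b r) + (- real (b i)) * ff b r) = ff a"
        proof -
        have ae': "a = b(i:=Suc(b i))" using ae unfolding b_def .
        show ?thesis unfolding ae' using coord_ff[OF i, of _ b] by (simp add: fun_eq_iff)
      qed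
      ultimately show ?thesis by simp
    qed
  qed
qed

lemma polys_ff: "polys d j n = spanset j ff (mons d n)"
proof
  show "polys d j n \<subseteq> spanset j ff (mons d n)"
    unfolding polys_eq using mon_in_ff spanset_trans[OF finite_mons] by blast
  show "spanset j ff (mons d n) \<subseteq> polys d j n"
    unfolding polys_eq using ff_in_mon spanset_trans[OF finite_mons] by blast
qed

end

context hs begin

lemma subsp_polys: "subsp (polys d j n)"
  unfolding subsp_def polys_eq using spanset_zero spanset_lin by blast

lemma orth_polys_polys: "f \<in> orth_polys d \<alpha> j n \<Longrightarrow> f \<in> polys d j n"
  unfolding orth_polys_def by simp

lemma subsp_orth: "subsp (orth_polys d \<alpha> j n)"
  unfolding subsp_def
proof (intro conjI ballI allI)
  show "(\<lambda>r. 0) \<in> orth_polys d \<alpha> j n"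
    unfolding orth_polys_def polys_eq using spanset_zero by (simp add: ip_def)
next
  fix f g a b assume f: "f \<in> orth_polys d \<alpha> j n" and g: "g \<in> orth_polys d \<alpha> j n"
  have "(\<lambda>r. a * f r + b * g r) \<in> polys d j n"
    using f g unfolding orth_polys_def polys_eq by (auto intro: spanset_lin)
  moreover have "\<forall>m<n. \<forall>h\<in>polys d j m. ip d \<alpha> j (\<lambda>r. a * f r + b * g r) h = 0"
    using f g unfolding orth_polys_def by (simp add: ip_lin)
  ultimately show "(\<lambda>r. a * f r + b * g r) \<in> orth_polys d \<alpha> j n" unfolding orth_polys_def by simp
qed

lemma polys_mono: "m \<le> n \<Longrightarrow> f \<in> polys d j m \<Longrightarrow> f \<in> polys d j n"
  unfolding polys_eq using spanset_mono[OF mons_mono finite_mons] by blast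

lemma lspan_orth:
  assumes "g \<in> lspan j B" "\<forall>k<length B. ip d \<alpha> j f (B!k) = 0"
  shows "ip d \<alpha> j f g = 0"
proof -
  from assms(1) obtain c where c: "\<forall>r\<in>S j. g r = (\<Sum>k<length B. c k * (B!k) r)" unfolding spanset_def by auto
  have "ip d \<alpha> j f g = ip d \<alpha> j g f" by (rule ip_sym)
  also have "\<dots> = ip d \<alpha> j (\<lambda>r. \<Sum>k<length B. c k * (B!k) r) f" using c by (intro ip_cong) auto
  also have "\<dots> = (\<Sum>k<length B. c k * ip d \<alpha> j (B!k) f)" by (rule ip_sum)
  also have "\<dots> = 0" using assms(2) by (simp add: ip_sym)
  finally show ?thesis .
qed

lemma finite_list_of: "finite M \<Longrightarrow> \<exists>xs. set xs = M" by (rule finite_list)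

lemma lower_onb:
  "\<exists>B0. orthonormal j B0 \<and> set B0 \<subseteq> polys d j n \<and> (\<forall>m<n. polys d j m \<subseteq> lspan j B0)
     \<and> (\<forall>f\<in>orth_polys d \<alpha> j n. \<forall>k<length B0. ip d \<alpha> j f (B0!k) = 0)"
proof (cases n)
  case 0
  then show ?thesis by (intro exI[of _ "[]"]) (simp add: orthonormal_def)
next
  case (Suc k)
  obtain xs where xs: "set xs = mons d k" using finite_list[OF finite_mons] by blast
  have "set (map mon xs) \<subseteq> polys d j k"
    using xs unfolding polys_eq by (auto intro: spanset_mem finite_mons)
  from GS[OF subsp_polys this] obtain B0 where
    B0: "set B0 \<subseteq> polys d j k" "orthonormal j B0" "set (map mon xs) \<subseteq> lspan j B0" by blast
  have "polys d j k \<subseteq> lspan j B0"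
  proof
    fix f assume "f \<in> polys d j k"
    then have "f \<in> spanset j mon (mons d k)" by (simp add: polys_eq)
    moreover have "\<forall>a\<in>mons d k. mon a \<in> lspan j B0" using B0(3) xs by auto
    ultimately show "f \<in> lspan j B0" using spanset_trans[OF finite_mons] by blast
  qed
  then have 1: "\<forall>m<n. polys d j m \<subseteq> lspan j B0" using Suc polys_mono by (auto simp: less_Suc_eq_le)
  have 2: "set B0 \<subseteq> polys d j n" using B0(1) Suc polys_mono[of k n] by auto
  have 3: "\<forall>f\<in>orth_polys d \<alpha> j n. \<forall>l<length B0. ip d \<alpha> j f (B0!l) = 0"
  proof (intro ballI allI impI)
    fix f l assume f: "f \<in> orth_polys d \<alpha> j n" and l: "l < length B0"
    have "B0!l \<in> polys d j k" using B0(1) l by auto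
    then show "ip d \<alpha> j f (B0!l) = 0" using f Suc unfolding orth_polys_def by auto
  qed
  show ?thesis using B0 1 2 3 by blast
qed

lemma onb_exists: "\<exists>Ps. is_onb d \<alpha> j n Ps"
proof -
  obtain B0 where B0o: "orthonormal j B0" and B0n: "set B0 \<subseteq> polys d j n"
    and B0s: "\<forall>m<n. polys d j m \<subseteq> lspan j B0"
    and B0f: "\<forall>f\<in>orth_polys d \<alpha> j n. \<forall>k<length B0. ip d \<alpha> j f (B0!k) = 0" using lower_onb by blast
  define proj where "proj g = (\<lambda>r. \<Sum>k<length B0. ip d \<alpha> j g (B0!k) * (B0!k) r)" for g
  define v where "v a = (\<lambda>r. 1 * mon a r + (-1) * proj (mon a) r)" for a
  have vorth: "v a \<in> orth_polys d \<alpha> j n" if a: "a \<in> mons d n" for a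
  proof -
    have "mon a \<in> polys d j n" using a unfolding polys_eq by (simp add: spanset_mem finite_mons)
    moreover have "proj (mon a) \<in> polys d j n" unfolding proj_def
      using B0n by (intro subsp_sum[OF subsp_polys]) auto
    ultimately have vp: "v a \<in> polys d j n" unfolding v_def by (rule subsp_lin[OF subsp_polys])
    have vB: "ip d \<alpha> j (v a) (B0!k) = 0" if "k < length B0" for k
    proof -
      have "ip d \<alpha> j (proj (mon a)) (B0!k) = ip d \<alpha> j (mon a) (B0!k)"
        unfolding proj_def by (rule onb_coeff[OF B0o _ that]) simp
      then show ?thesis unfolding v_def ip_lin by simp
    qed
    have "\<forall>m<n. \<forall>g\<in>polys d j m. ip d \<alpha> j (v a) g = 0"
      using B0s vB lspan_orth by blast
    then show ?thesis using vp unfolding orth_polys_def by simp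
  qed
  obtain xs where xs: "set xs = mons d n" using finite_list[OF finite_mons] by blast
  have "set (map v xs) \<subseteq> orth_polys d \<alpha> j n" using xs vorth by auto
  from GS[OF subsp_orth this] obtain Ps where
    Ps: "set Ps \<subseteq> orth_polys d \<alpha> j n" "orthonormal j Ps" "set (map v xs) \<subseteq> lspan j Ps" by blast
  have vspan: "\<forall>a\<in>mons d n. v a \<in> lspan j Ps" using Ps(3) xs by auto
  have span: "f \<in> lspan j Ps" if f: "f \<in> orth_polys d \<alpha> j n" for f
  proof -
    from f have "f \<in> spanset j mon (mons d n)" unfolding orth_polys_def polys_eq by simp
    then obtain c where c: "\<forall>r\<in>S j. f r = (\<Sum>a\<in>mons d n. c a * mon a r)" unfolding spanset_def by auto
    have cB: "(\<Sum>a\<in>mons d n. c a * ip d \<alpha> j (mon a) (B0!k)) = 0" if k: "k < length B0" for k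
    proof -
      have "(\<Sum>a\<in>mons d n. c a * ip d \<alpha> j (mon a) (B0!k)) = ip d \<alpha> j (\<lambda>r. \<Sum>a\<in>mons d n. c a * mon a r) (B0!k)"
        by (rule ip_sum[symmetric])
      also have "\<dots> = ip d \<alpha> j f (B0!k)" using c by (intro ip_cong) auto
      also have "\<dots> = 0" using B0f f k by blast
      finally show ?thesis .
    qed
    have pr: "(\<Sum>a\<in>mons d n. c a * proj (mon a) r) = 0" for r
    proof -
      have "(\<Sum>a\<in>mons d n. c a * proj (mon a) r)
          = (\<Sum>a\<in>mons d n. \<Sum>k<length B0. c a * ip d \<alpha> j (mon a) (B0!k) * (B0!k) r)"
        unfolding proj_def by (simp add: sum_distrib_left mult.assoc)
      also have "\<dots> = (\<Sum>k<length B0. \<Sum>a\<in>mons d n. c a * ip d \<alpha> j (mon a) (B0!k) * (B0!k) r)"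
        by (rule sum.swap)
      also have "\<dots> = (\<Sum>k<length B0. (\<Sum>a\<in>mons d n. c a * ip d \<alpha> j (mon a) (B0!k)) * (B0!k) r)"
        by (simp add: sum_distrib_right)
      also have "\<dots> = 0" using cB by simp
      finally show ?thesis .
    qed
    have h1: "(\<lambda>r. \<Sum>a\<in>mons d n. c a * v a r) \<in> lspan j Ps"
      using vspan by (intro spanset_sum) (auto simp: finite_mons)
    have h2: "\<forall>r\<in>S j. f r = (\<Sum>a\<in>mons d n. c a * v a r)"
    proof
      fix r assume r: "r \<in> S j"
      have "(\<Sum>a\<in>mons d n. c a * v a r) = (\<Sum>a\<in>mons d n. c a * mon a r) - (\<Sum>a\<in>mons d n. c a * proj (mon a) r)"
        unfolding v_def by (simp add: algebra_simps sum_subtractf)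
      then show "f r = (\<Sum>a\<in>mons d n. c a * v a r)" using pr c r by simp
    qed
    show ?thesis by (rule spanset_cong[OF h1 h2])
  qed
  have "is_onb d \<alpha> j n Ps"
    unfolding is_onb_def using Ps(1,2) span unfolding orthonormal_def spanset_def by blast
  then show ?thesis by blast
qed

end

context hs begin

definition PB :: "nat \<Rightarrow> nat \<Rightarrow> ((nat\<Rightarrow>nat)\<Rightarrow>real) list" where
  "PB j n = (SOME Ps. is_onb d \<alpha> j n Ps)"
definition Q :: "nat \<Rightarrow> nat \<times> nat \<Rightarrow> (nat\<Rightarrow>nat)\<Rightarrow>real" where
  "Q j x = PB j (fst x) ! snd x"
definition J :: "nat \<Rightarrow> nat \<Rightarrow> (nat \<times> nat) set" where
  "J j n = (SIGMA n':{..<n}. {..<length (PB j n')})"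

lemma PB_onb: "is_onb d \<alpha> j n (PB j n)"
  unfolding PB_def using onb_exists by (rule someI_ex)

lemma PB_orth: "k < length (PB j n) \<Longrightarrow> PB j n ! k \<in> orth_polys d \<alpha> j n"
  using PB_onb[of j n] unfolding is_onb_def by auto

lemma PB_on: "orthonormal j (PB j n)"
  using PB_onb[of j n] unfolding is_onb_def orthonormal_def by auto

lemma PB_span: "f \<in> orth_polys d \<alpha> j n \<Longrightarrow> \<forall>r\<in>S j. f r = (\<Sum>k<length (PB j n). ip d \<alpha> j f (PB j n ! k) * (PB j n ! k) r)"
proof -
  assume f: "f \<in> orth_polys d \<alpha> j n"
  then obtain c where c: "\<forall>r\<in>S j. f r = (\<Sum>k<length (PB j n). c k * (PB j n ! k) r)"
    using PB_onb[of j n] unfolding is_onb_def by blast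
  have "\<forall>k<length (PB j n). c k = ip d \<alpha> j f (PB j n ! k)"
    using onb_coeff[OF PB_on c] by simp
  then show ?thesis using c by simp
qed

lemma finite_J: "finite (J j n)"
  unfolding J_def by (intro finite_SigmaI) auto

lemma J_valid: "x \<in> J j n \<Longrightarrow> fst x < n \<and> snd x < length (PB j (fst x))"
  unfolding J_def by auto

lemma Q_orth: "snd x < length (PB j (fst x)) \<Longrightarrow> Q j x \<in> orth_polys d \<alpha> j (fst x)"
  unfolding Q_def by (rule PB_orth)

lemma Q_polys: "snd x < length (PB j (fst x)) \<Longrightarrow> fst x \<le> n \<Longrightarrow> Q j x \<in> polys d j n"
  using Q_orth[of x j] orth_polys_polys polys_mono by blast

lemma Q_on:
  assumes x: "snd x < length (PB j (fst x))" and y: "snd y < length (PB j (fst y))"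
  shows "ip d \<alpha> j (Q j x) (Q j y) = (if x = y then 1 else 0)"
proof (cases "fst x = fst y")
  case True
  then show ?thesis using PB_on[of j "fst x"] x y unfolding orthonormal_def Q_def
    by (auto simp: prod_eq_iff)
next
  case False
  have "ip d \<alpha> j (Q j x) (Q j y) = 0"
  proof (cases "fst x < fst y")
    case True
    have "Q j x \<in> polys d j (fst x)" using Q_polys[OF x] by simp
    then have "ip d \<alpha> j (Q j y) (Q j x) = 0" using Q_orth[OF y] True unfolding orth_polys_def by auto
    then show ?thesis by (simp add: ip_sym)
  next
    case F: False
    then have lt: "fst y < fst x" using False by simp
    have "Q j y \<in> polys d j (fst y)" using Q_polys[OF y] by simp
    then show ?thesis using Q_orth[OF x] lt unfolding orth_polys_def by auto
  qed
  then show ?thesis using False by auto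
qed

lemma sum_J_delta:
  assumes "snd y < length (PB j (fst y))"
  shows "(\<Sum>x\<in>J j n. a x * ip d \<alpha> j (Q j x) (Q j y)) = (if fst y < n then a y else 0)"
proof -
  have "(\<Sum>x\<in>J j n. a x * ip d \<alpha> j (Q j x) (Q j y)) = (\<Sum>x\<in>J j n. if x = y then a x else 0)"
    using assms J_valid by (intro sum.cong) (auto simp: Q_on)
  also have "\<dots> = (if y \<in> J j n then a y else 0)" using finite_J by (simp add: sum.delta')
  also have "(y \<in> J j n) = (fst y < n)" using assms unfolding J_def by (cases y) auto
  finally show ?thesis .
qed

lemma sum_J_Suc:
  "(\<Sum>x\<in>J j (Suc n). F x) = (\<Sum>x\<in>J j n. F x) + (\<Sum>k<length (PB j n). F (n, k))"
proof -
  have e: "J j (Suc n) = J j n \<union> Pair n ` {..<length (PB j n)}"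
    unfolding J_def by (auto simp: less_Suc_eq)
  have disj: "J j n \<inter> Pair n ` {..<length (PB j n)} = {}"
    unfolding J_def by auto
  have "(\<Sum>x\<in>J j (Suc n). F x) = (\<Sum>x\<in>J j n. F x) + (\<Sum>x\<in>Pair n ` {..<length (PB j n)}. F x)"
    unfolding e using disj finite_J by (intro sum.union_disjoint) auto
  also have "(\<Sum>x\<in>Pair n ` {..<length (PB j n)}. F x) = (\<Sum>k<length (PB j n). F (n, k))"
    by (subst sum.reindex) (auto simp: inj_on_def)
  finally show ?thesis .
qed

lemma complete: "\<forall>f\<in>polys d j n. \<forall>r\<in>S j. f r = (\<Sum>x\<in>J j (Suc n). ip d \<alpha> j f (Q j x) * Q j x r)"
proof (induction n rule: less_induct)
  case (less n)
  show ?case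
  proof (intro ballI)
    fix f r assume f: "f \<in> polys d j n" and r: "r \<in> S j"
    define E where "E = (\<lambda>r. \<Sum>x\<in>J j n. ip d \<alpha> j f (Q j x) * Q j x r)"
    define g where "g = (\<lambda>r. 1 * f r + (-1) * E r)"
    have Ep: "E \<in> polys d j n" unfolding E_def
      using J_valid Q_polys by (intro subsp_sum[OF subsp_polys finite_J]) (meson less_imp_le)
    have gp: "g \<in> polys d j n" unfolding g_def by (rule subsp_lin[OF subsp_polys f Ep])
    have gQ: "ip d \<alpha> j g (Q j y) = (if fst y < n then 0 else ip d \<alpha> j f (Q j y))"
      if y: "snd y < length (PB j (fst y))" for y
    proof -
      have "ip d \<alpha> j E (Q j y) = (\<Sum>x\<in>J j n. ip d \<alpha> j f (Q j x) * ip d \<alpha> j (Q j x) (Q j y))"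
        unfolding E_def by (rule ip_sum)
      also have "\<dots> = (if fst y < n then ip d \<alpha> j f (Q j y) else 0)" by (rule sum_J_delta[OF y])
      finally show ?thesis unfolding g_def ip_lin by simp
    qed
    have gorth: "g \<in> orth_polys d \<alpha> j n"
      unfolding orth_polys_def
    proof (intro CollectI conjI gp allI impI ballI)
      fix m h assume m: "m < n" and h: "h \<in> polys d j m"
      then obtain n1 where n1: "n = Suc n1" by (cases n) auto
      have hp: "h \<in> polys d j n1" using polys_mono[of m n1] m n1 h by simp
      have hexp: "\<forall>r\<in>S j. h r = (\<Sum>x\<in>J j n. ip d \<alpha> j h (Q j x) * Q j x r)"
        using less.IH[of n1] n1 hp by simp
      have "ip d \<alpha> j g h = ip d \<alpha> j h g" by (rule ip_sym)
      also have "\<dots> = ip d \<alpha> j (\<lambda>r. \<Sum>x\<in>J j n. ip d \<alpha> j h (Q j x) * Q j x r) g"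
        using hexp by (intro ip_cong) auto
      also have "\<dots> = (\<Sum>x\<in>J j n. ip d \<alpha> j h (Q j x) * ip d \<alpha> j (Q j x) g)" by (rule ip_sum)
      also have "\<dots> = 0"
      proof (intro sum.neutral ballI)
        fix x assume x: "x \<in> J j n"
        have "ip d \<alpha> j (Q j x) g = ip d \<alpha> j g (Q j x)" by (rule ip_sym)
        also have "\<dots> = 0" using gQ[of x] J_valid[OF x] by simp
        finally show "ip d \<alpha> j h (Q j x) * ip d \<alpha> j (Q j x) g = 0" by simp
      qed
      finally show "ip d \<alpha> j g h = 0" .
    qed
    have gexp: "g r = (\<Sum>k<length (PB j n). ip d \<alpha> j g (PB j n ! k) * (PB j n ! k) r)"
      using PB_span[OF gorth] r by blast
    also have "\<dots> = (\<Sum>k<length (PB j n). ip d \<alpha> j f (Q j (n,k)) * Q j (n,k) r)"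
    proof (intro sum.cong refl)
      fix k assume "k \<in> {..<length (PB j n)}"
      then have "ip d \<alpha> j g (Q j (n,k)) = ip d \<alpha> j f (Q j (n,k))" using gQ[of "(n,k)"] by simp
      then show "ip d \<alpha> j g (PB j n ! k) * (PB j n ! k) r = ip d \<alpha> j f (Q j (n,k)) * Q j (n,k) r"
        unfolding Q_def by simp
    qed
    finally have "f r = E r + (\<Sum>k<length (PB j n). ip d \<alpha> j f (Q j (n,k)) * Q j (n,k) r)"
      unfolding g_def by simp
    then show "f r = (\<Sum>x\<in>J j (Suc n). ip d \<alpha> j f (Q j x) * Q j x r)"
      unfolding sum_J_Suc E_def by simp
  qed
qed

end

context hs begin

lemma simplex_mons: "S N \<subseteq> mons d N"
  unfolding simplex_def mons_def by auto

lemma falling_zero: "m < k \<Longrightarrow> falling (real m) k = 0"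
  unfolding falling_def by (rule prod_zero) auto

lemma falling_self_pos: "0 < falling (real m) m"
  unfolding falling_def by (rule prod_pos) auto

lemma ff_diag_pos: "0 < ff r r"
  unfolding ff_def by (rule prod_pos) (simp add: falling_self_pos)

lemma ff_off: assumes a: "a \<in> S N" and r: "r \<in> S N" and ne: "a \<noteq> r" shows "ff a r = 0"
proof -
  have "\<exists>i<d. r i < a i"
  proof (rule ccontr)
    assume "\<not> (\<exists>i<d. r i < a i)"
    then have le: "\<forall>i<d. a i \<le> r i" by auto
    have "\<forall>i<d. a i = r i"
    proof (rule ccontr)
      assume "\<not> (\<forall>i<d. a i = r i)"
      then obtain i where "i < d" "a i < r i" using le by (meson le_neq_implies_less)
      then have "(\<Sum>i<d. a i) < (\<Sum>i<d. r i)"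
        using le by (intro sum_strict_mono_ex1) auto
      then show False using a r unfolding simplex_def by simp
    qed
    moreover have "\<forall>i\<ge>d. a i = r i" using a r unfolding simplex_def by simp
    ultimately have "a = r" by (metis not_le ext)
    then show False using ne by simp
  qed
  then obtain i where i: "i < d" "r i < a i" by blast
  show ?thesis unfolding ff_def by (rule prod_zero) (use i falling_zero in auto)
qed

lemma all_polys: "f \<in> polys d N N"
proof -
  define c where "c a = (if a \<in> S N then f a / ff a a else 0)" for a
  have "\<forall>r\<in>S N. f r = (\<Sum>a\<in>mons d N. c a * ff a r)"
  proof
    fix r assume r: "r \<in> S N"
    have "(\<Sum>a\<in>mons d N. c a * ff a r) = (\<Sum>a\<in>mons d N. if a = r then f r else 0)"
    proof (intro sum.cong refl)
      fix a assume "a \<in> mons d N"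
      show "c a * ff a r = (if a = r then f r else 0)"
        using r ff_off[of a N r] ff_diag_pos[of r] unfolding c_def by auto
    qed
    also have "\<dots> = f r" using r simplex_mons finite_mons by (auto simp: sum.delta')
    finally show "f r = (\<Sum>a\<in>mons d N. c a * ff a r)" by simp
  qed
  then show ?thesis unfolding polys_ff spanset_def by blast
qed

lemma hpds_op:
  fixes T :: "((nat\<Rightarrow>nat)\<Rightarrow>real) \<Rightarrow> ((nat\<Rightarrow>nat)\<Rightarrow>real)" and \<rho> :: "nat \<Rightarrow> real"
  assumes lin: "\<And>(X::(nat\<times>nat) set) c g. finite X \<Longrightarrow> \<forall>r\<in>S N. T (\<lambda>r. \<Sum>x\<in>X. c x * g x r) r = (\<Sum>x\<in>X. c x * T (g x) r)"
    and resp: "\<And>f g. \<forall>r\<in>S N. f r = g r \<Longrightarrow> \<forall>r\<in>S N. T f r = T g r"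
    and pos: "\<And>f. \<forall>r\<in>S N. 0 \<le> f r \<Longrightarrow> \<forall>r\<in>S N. 0 \<le> T f r"
    and eig: "\<And>n P. n \<le> N \<Longrightarrow> P \<in> orth_polys d \<alpha> N n \<Longrightarrow> \<forall>r\<in>S N. T P r = \<rho> n * P r"
    and r0: "\<rho> 0 = 1"
  shows "HPDS d \<alpha> N \<rho>"
  unfolding HPDS_def
proof (intro conjI r0 ballI)
  fix r s assume r: "r \<in> S N" and s: "s \<in> S N"
  define \<delta> where "\<delta> = (\<lambda>x. if x = s then 1 / DM d \<alpha> N s else 0)"
  have ipd: "ip d \<alpha> N \<delta> g = g s" for g
  proof -
    have "ip d \<alpha> N \<delta> g = (\<Sum>t\<in>S N. if t = s then g s else 0)"
      unfolding ip_def \<delta>_def using w_pos[OF s] by (intro sum.cong) auto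
    also have "\<dots> = g s" using s finite_simplex by (simp add: sum.delta')
    finally show ?thesis .
  qed
  have dexp: "\<forall>t\<in>S N. \<delta> t = (\<Sum>x\<in>J N (Suc N). Q N x s * Q N x t)"
  proof -
    have "\<delta> \<in> polys d N N" by (rule all_polys)
    then have "\<forall>t\<in>S N. \<delta> t = (\<Sum>x\<in>J N (Suc N). ip d \<alpha> N \<delta> (Q N x) * Q N x t)"
      using complete[of N N] by blast
    then show ?thesis unfolding ipd .
  qed
  have "T \<delta> r = T (\<lambda>t. \<Sum>x\<in>J N (Suc N). Q N x s * Q N x t) r"
    using resp[OF dexp] r by simp
  also have "\<dots> = (\<Sum>x\<in>J N (Suc N). Q N x s * T (Q N x) r)"
    using lin[OF finite_J] r by simp
  also have "\<dots> = (\<Sum>x\<in>J N (Suc N). Q N x s * (\<rho> (fst x) * Q N x r))"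
  proof (intro sum.cong refl)
    fix x assume x: "x \<in> J N (Suc N)"
    then have "T (Q N x) r = \<rho> (fst x) * Q N x r"
      using eig[of "fst x" "Q N x"] J_valid[OF x] Q_orth[of x N] r by simp
    then show "Q N x s * T (Q N x) r = Q N x s * (\<rho> (fst x) * Q N x r)" by simp
  qed
  also have "\<dots> = (\<Sum>n<Suc N. \<Sum>k<length (PB N n). Q N (n,k) s * (\<rho> n * Q N (n,k) r))"
    unfolding J_def by (subst sum.Sigma) (auto intro!: sum.cong)
  also have "\<dots> = (\<Sum>n\<le>N. \<rho> n * hahn_kernel d \<alpha> N n r s)"
    unfolding hahn_kernel_def Let_def PB_def[symmetric] Q_def lessThan_Suc_atMost
    by (simp add: sum_distrib_left ac_simps)
  finally have e: "T \<delta> r = (\<Sum>n\<le>N. \<rho> n * hahn_kernel d \<alpha> N n r s)" .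
  have "\<forall>t\<in>S N. 0 \<le> \<delta> t" unfolding \<delta>_def using w_pos[OF s] by simp
  then have "0 \<le> T \<delta> r" using pos r by blast
  then show "0 \<le> (\<Sum>n\<le>N. \<rho> n * hahn_kernel d \<alpha> N n r s)" using e by simp
qed

end

context hs begin

definition dg :: "(nat\<Rightarrow>nat) \<Rightarrow> nat" where "dg c = (\<Sum>i<d. c i)"

definition LINr :: "nat \<Rightarrow> nat \<Rightarrow> (((nat\<Rightarrow>nat)\<Rightarrow>real) \<Rightarrow> ((nat\<Rightarrow>nat)\<Rightarrow>real)) \<Rightarrow> bool" where
  "LINr a b T \<longleftrightarrow> (\<forall>f g. \<forall>r\<in>S b. T (\<lambda>x. f x + g x) r = T f r + T g r) \<and>
                  (\<forall>c f. \<forall>r\<in>S b. T (\<lambda>x. c * f x) r = c * T f r)"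

definition RESP :: "nat \<Rightarrow> nat \<Rightarrow> (((nat\<Rightarrow>nat)\<Rightarrow>real) \<Rightarrow> ((nat\<Rightarrow>nat)\<Rightarrow>real)) \<Rightarrow> bool" where
  "RESP a b T \<longleftrightarrow> (\<forall>f g. (\<forall>r\<in>S a. f r = g r) \<longrightarrow> (\<forall>r\<in>S b. T f r = T g r))"

definition POS :: "nat \<Rightarrow> nat \<Rightarrow> (((nat\<Rightarrow>nat)\<Rightarrow>real) \<Rightarrow> ((nat\<Rightarrow>nat)\<Rightarrow>real)) \<Rightarrow> bool" where
  "POS a b T \<longleftrightarrow> (\<forall>f. (\<forall>r\<in>S a. 0 \<le> f r) \<longrightarrow> (\<forall>r\<in>S b. 0 \<le> T f r))"

definition TRI :: "nat \<Rightarrow> nat \<Rightarrow> (((nat\<Rightarrow>nat)\<Rightarrow>real) \<Rightarrow> ((nat\<Rightarrow>nat)\<Rightarrow>real)) \<Rightarrow> (nat \<Rightarrow> real) \<Rightarrow> bool" where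
  "TRI a b T lam \<longleftrightarrow> (\<forall>c. (\<forall>i\<ge>d. c i = 0) \<longrightarrow>
      (\<exists>h\<in>spanset b ff (monsl (dg c)). \<forall>r\<in>S b. T (ff c) r = lam (dg c) * ff c r + h r))"

lemma RESP_D: "RESP a b T \<Longrightarrow> \<forall>r\<in>S a. f r = g r \<Longrightarrow> r \<in> S b \<Longrightarrow> T f r = T g r"
  unfolding RESP_def by blast

lemma LINr_add: "LINr a b T \<Longrightarrow> r \<in> S b \<Longrightarrow> T (\<lambda>x. f x + g x) r = T f r + T g r"
  unfolding LINr_def by blast

lemma LINr_scale: "LINr a b T \<Longrightarrow> r \<in> S b \<Longrightarrow> T (\<lambda>x. c * f x) r = c * T f r"
  unfolding LINr_def by blast

lemma LINr_zero: assumes "LINr a b T" "r \<in> S b" shows "T (\<lambda>x. 0) r = 0"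
  using LINr_scale[OF assms, of 0 "\<lambda>x. 0"] by simp

lemma LIN_sum:
  assumes L: "LINr a b T" and X: "finite X"
  shows "\<forall>r\<in>S b. T (\<lambda>x. \<Sum>y\<in>X. c y * g y x) r = (\<Sum>y\<in>X. c y * T (g y) r)"
  using X
proof (induction X rule: finite_induct)
  case empty
  then show ?case using LINr_zero[OF L] by simp
next
  case (insert y F)
  show ?case
  proof
    fix r assume r: "r \<in> S b"
    have add: "T (\<lambda>x. (c y * g y x) + (\<Sum>y\<in>F. c y * g y x)) r = T (\<lambda>x. c y * g y x) r + T (\<lambda>x. \<Sum>y\<in>F. c y * g y x) r"
      by (rule LINr_add[OF L r])
    have sc: "T (\<lambda>x. c y * g y x) r = c y * T (g y) r" by (rule LINr_scale[OF L r])
    have "(\<lambda>x. \<Sum>y\<in>insert y F. c y * g y x) = (\<lambda>x. (c y * g y x) + (\<Sum>y\<in>F. c y * g y x))"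
      using insert.hyps by simp
    then show "T (\<lambda>x. \<Sum>y\<in>insert y F. c y * g y x) r = (\<Sum>y\<in>insert y F. c y * T (g y) r)"
      using add sc insert.IH r insert.hyps by simp
  qed
qed

lemma LIN_lin:
  assumes L: "LINr a b T" and r: "r \<in> S b"
  shows "T (\<lambda>x. p * f x + q * g x) r = p * T f r + q * T g r"
proof -
  have "T (\<lambda>x. (p * f x) + (q * g x)) r = T (\<lambda>x. p * f x) r + T (\<lambda>x. q * g x) r"
    by (rule LINr_add[OF L r])
  moreover have "T (\<lambda>x. p * f x) r = p * T f r" by (rule LINr_scale[OF L r])
  moreover have "T (\<lambda>x. q * g x) r = q * T g r" by (rule LINr_scale[OF L r])
  ultimately show ?thesis by simp
qed

lemma monsl_mono: "k \<le> n \<Longrightarrow> monsl k \<subseteq> monsl n"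
  unfolding monsl_def by auto

lemma monsl_dg: "c \<in> monsl n \<Longrightarrow> (\<forall>i\<ge>d. c i = 0) \<and> dg c < n"
  unfolding monsl_def dg_def by auto

lemma lowmap:
  assumes L: "LINr a b T" and R: "RESP a b T" and Tr: "TRI a b T lam"
    and f: "f \<in> spanset a ff (monsl n)"
  shows "T f \<in> spanset b ff (monsl n)"
proof -
  from f obtain e where e: "\<forall>r\<in>S a. f r = (\<Sum>c\<in>monsl n. e c * ff c r)" unfolding spanset_def by auto
  have each: "T (ff c) \<in> spanset b ff (monsl n)" if c: "c \<in> monsl n" for c
  proof -
    have cs: "\<forall>i\<ge>d. c i = 0" and cd: "dg c < n" using monsl_dg[OF c] by auto
    obtain h where h: "h \<in> spanset b ff (monsl (dg c))"
      and hT: "\<forall>r\<in>S b. T (ff c) r = lam (dg c) * ff c r + h r"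
      using Tr cs unfolding TRI_def by blast
    have h': "h \<in> spanset b ff (monsl n)"
      using spanset_mono[OF monsl_mono finite_monsl h] cd by simp
    have fc: "ff c \<in> spanset b ff (monsl n)" using c by (simp add: spanset_mem finite_monsl)
    have "(\<lambda>r. lam (dg c) * ff c r + 1 * h r) \<in> spanset b ff (monsl n)" by (rule spanset_lin[OF fc h'])
    then show ?thesis by (rule spanset_cong) (use hT in simp)
  qed
  have s: "(\<lambda>r. \<Sum>c\<in>monsl n. e c * T (ff c) r) \<in> spanset b ff (monsl n)"
    using each by (intro spanset_sum finite_monsl) auto
  have "\<forall>r\<in>S b. T f r = (\<Sum>c\<in>monsl n. e c * T (ff c) r)"
  proof
    fix r assume r: "r \<in> S b"
    have "T f r = T (\<lambda>x. \<Sum>c\<in>monsl n. e c * ff c x) r" using RESP_D[OF R e r] .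
    also have "\<dots> = (\<Sum>c\<in>monsl n. e c * T (ff c) r)" using LIN_sum[OF L finite_monsl] r by blast
    finally show "T f r = (\<Sum>c\<in>monsl n. e c * T (ff c) r)" .
  qed
  then show ?thesis by (rule spanset_cong[OF s])
qed

lemma comp_LINr:
  assumes L1: "LINr a b T1" and L2: "LINr b c T2" and R2: "RESP b c T2"
  shows "LINr a c (\<lambda>f. T2 (T1 f))"
  unfolding LINr_def
proof (intro conjI allI ballI)
  fix f g r assume r: "r \<in> S c"
  have "\<forall>x\<in>S b. T1 (\<lambda>x. f x + g x) x = T1 f x + T1 g x" using LINr_add[OF L1] by blast
  then have "T2 (T1 (\<lambda>x. f x + g x)) r = T2 (\<lambda>x. T1 f x + T1 g x) r" by (rule RESP_D[OF R2 _ r])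
  also have "\<dots> = T2 (T1 f) r + T2 (T1 g) r" by (rule LINr_add[OF L2 r])
  finally show "T2 (T1 (\<lambda>x. f x + g x)) r = T2 (T1 f) r + T2 (T1 g) r" .
next
  fix ca f r assume r: "r \<in> S c"
  have "\<forall>x\<in>S b. T1 (\<lambda>x. ca * f x) x = ca * T1 f x" using LINr_scale[OF L1] by blast
  then have "T2 (T1 (\<lambda>x. ca * f x)) r = T2 (\<lambda>x. ca * T1 f x) r" by (rule RESP_D[OF R2 _ r])
  also have "\<dots> = ca * T2 (T1 f) r" by (rule LINr_scale[OF L2 r])
  finally show "T2 (T1 (\<lambda>x. ca * f x)) r = ca * T2 (T1 f) r" .
qed

lemma comp_RESP: "RESP a b T1 \<Longrightarrow> RESP b c T2 \<Longrightarrow> RESP a c (\<lambda>f. T2 (T1 f))"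
  unfolding RESP_def by blast

lemma comp_POS: "POS a b T1 \<Longrightarrow> POS b c T2 \<Longrightarrow> POS a c (\<lambda>f. T2 (T1 f))"
  unfolding POS_def by blast

lemma comp_TRI:
  assumes T1: "TRI a b T1 lamA" and T2: "TRI b c T2 lamB"
    and L2: "LINr b c T2" and R2: "RESP b c T2"
  shows "TRI a c (\<lambda>f. T2 (T1 f)) (\<lambda>n. lamA n * lamB n)"
  unfolding TRI_def
proof (intro allI impI)
  fix e :: "nat \<Rightarrow> nat" assume es: "\<forall>i\<ge>d. e i = 0"
  obtain h1 where h1: "h1 \<in> spanset b ff (monsl (dg e))"
    and h1T: "\<forall>r\<in>S b. T1 (ff e) r = lamA (dg e) * ff e r + h1 r" using T1 es unfolding TRI_def by blast
  obtain h2 where h2: "h2 \<in> spanset c ff (monsl (dg e))"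
    and h2T: "\<forall>r\<in>S c. T2 (ff e) r = lamB (dg e) * ff e r + h2 r" using T2 es unfolding TRI_def by blast
  have Th1: "T2 h1 \<in> spanset c ff (monsl (dg e))" by (rule lowmap[OF L2 R2 T2 h1])
  define h where "h = (\<lambda>r. lamA (dg e) * h2 r + 1 * T2 h1 r)"
  have hs: "h \<in> spanset c ff (monsl (dg e))" unfolding h_def by (rule spanset_lin[OF h2 Th1])
  have "\<forall>r\<in>S c. T2 (T1 (ff e)) r = lamA (dg e) * lamB (dg e) * ff e r + h r"
  proof
    fix r assume r: "r \<in> S c"
    have h1T': "\<forall>x\<in>S b. T1 (ff e) x = lamA (dg e) * ff e x + 1 * h1 x" using h1T by simp
    have "T2 (T1 (ff e)) r = T2 (\<lambda>x. lamA (dg e) * ff e x + 1 * h1 x) r" using RESP_D[OF R2 h1T' r] .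
    also have "\<dots> = lamA (dg e) * T2 (ff e) r + 1 * T2 h1 r" by (rule LIN_lin[OF L2 r])
    also have "\<dots> = lamA (dg e) * lamB (dg e) * ff e r + h r"
      using h2T r unfolding h_def by (simp add: algebra_simps)
    finally show "T2 (T1 (ff e)) r = lamA (dg e) * lamB (dg e) * ff e r + h r" .
  qed
  then show "\<exists>h\<in>spanset c ff (monsl (dg e)). \<forall>r\<in>S c. T2 (T1 (ff e)) r = lamA (dg e) * lamB (dg e) * ff e r + h r"
    using hs by blast
qed

lemma polys_monsl: "polys d j n = spanset j ff (monsl (Suc n))"
  by (simp add: polys_ff monsl_Suc)

lemma eig_tri:
  assumes L: "LINr N N T" and R: "RESP N N T" and Tr: "TRI N N T lam"
    and SA: "\<And>f g. ip d \<alpha> N (T f) g = ip d \<alpha> N f (T g)"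
    and P: "P \<in> orth_polys d \<alpha> N n"
  shows "\<forall>r\<in>S N. T P r = lam n * P r"
proof -
  have "P \<in> spanset N ff (mons d n)" using P unfolding orth_polys_def polys_ff by simp
  then obtain e where e: "\<forall>r\<in>S N. P r = (\<Sum>c\<in>mons d n. e c * ff c r)" unfolding spanset_def by auto
  define h where "h = (\<lambda>r. T P r - lam n * P r)"
  have each: "(\<lambda>r. T (ff c) r - lam n * ff c r) \<in> spanset N ff (monsl n)" if c: "c \<in> mons d n" for c
  proof -
    have cs: "\<forall>i\<ge>d. c i = 0" and cd: "dg c \<le> n" using c unfolding mons_def dg_def by auto
    obtain g where g: "g \<in> spanset N ff (monsl (dg c))"
      and gT: "\<forall>r\<in>S N. T (ff c) r = lam (dg c) * ff c r + g r"
      using Tr cs unfolding TRI_def by blast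
    have g': "g \<in> spanset N ff (monsl n)"
      using spanset_mono[OF monsl_mono finite_monsl g] cd by simp
    show ?thesis
    proof (cases "dg c = n")
      case True
      then show ?thesis using gT by (intro spanset_cong[OF g']) simp
    next
      case False
      then have "c \<in> monsl n" using cs cd unfolding monsl_def dg_def by simp
      then have fc: "ff c \<in> spanset N ff (monsl n)" by (simp add: spanset_mem finite_monsl)
      have "(\<lambda>r. (lam (dg c) - lam n) * ff c r + 1 * g r) \<in> spanset N ff (monsl n)" by (rule spanset_lin[OF fc g'])
      then show ?thesis by (rule spanset_cong) (use gT in \<open>simp add: algebra_simps\<close>)
    qed
  qed
  have hs: "h \<in> spanset N ff (monsl n)"
  proof -
    have s: "(\<lambda>r. \<Sum>c\<in>mons d n. e c * (T (ff c) r - lam n * ff c r)) \<in> spanset N ff (monsl n)"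
      using each by (intro spanset_sum finite_mons) auto
    have "\<forall>r\<in>S N. h r = (\<Sum>c\<in>mons d n. e c * (T (ff c) r - lam n * ff c r))"
    proof
      fix r assume r: "r \<in> S N"
      have "T P r = T (\<lambda>x. \<Sum>c\<in>mons d n. e c * ff c x) r" using RESP_D[OF R e r] .
      also have "\<dots> = (\<Sum>c\<in>mons d n. e c * T (ff c) r)" using LIN_sum[OF L finite_mons] r by blast
      finally have "T P r = (\<Sum>c\<in>mons d n. e c * T (ff c) r)" .
      then show "h r = (\<Sum>c\<in>mons d n. e c * (T (ff c) r - lam n * ff c r))"
        unfolding h_def using e r by (simp add: algebra_simps sum_subtractf sum_distrib_left)
    qed
    then show ?thesis by (rule spanset_cong[OF s])
  qed
  have "\<forall>r\<in>S N. h r = 0"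
  proof (cases n)
    case 0
    then show ?thesis using hs spanset_empty monsl_0 by simp
  next
    case (Suc n1)
    have hp: "h \<in> polys d N n1" using hs Suc polys_monsl by simp
    have Thp: "T h \<in> polys d N n1" using lowmap[OF L R Tr hs] Suc polys_monsl by simp
    have oP: "\<forall>m<n. \<forall>g\<in>polys d N m. ip d \<alpha> N P g = 0" using P unfolding orth_polys_def by simp
    have o1: "ip d \<alpha> N P h = 0" using oP[rule_format, of n1 h] hp Suc by simp
    have o2: "ip d \<alpha> N P (T h) = 0" using oP[rule_format, of n1 "T h"] Thp Suc by simp
    have "ip d \<alpha> N h h = ip d \<alpha> N (\<lambda>r. 1 * T P r + (- lam n) * P r) h"
      unfolding h_def by simp
    also have "\<dots> = ip d \<alpha> N (T P) h - lam n * ip d \<alpha> N P h" unfolding ip_lin by simp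
    also have "\<dots> = 0" using SA o1 o2 by simp
    finally show ?thesis by (rule ip_zero)
  qed
  then show ?thesis unfolding h_def by simp
qed

end

context hs begin

definition Uop :: "nat \<Rightarrow> ((nat\<Rightarrow>nat)\<Rightarrow>real) \<Rightarrow> ((nat\<Rightarrow>nat)\<Rightarrow>real)" where
  "Uop k f = (\<lambda>l. \<Sum>j<d. (\<alpha> j + real (l j)) / (AA + real k) * f (l(j := Suc (l j))))"
definition Dop :: "nat \<Rightarrow> ((nat\<Rightarrow>nat)\<Rightarrow>real) \<Rightarrow> ((nat\<Rightarrow>nat)\<Rightarrow>real)" where
  "Dop k g = (\<lambda>r. \<Sum>i<d. real (r i) / real (Suc k) * g (r(i := r i - 1)))"

lemma up_simplex: assumes l: "l \<in> S k" and j: "j < d" shows "l(j := Suc (l j)) \<in> S (Suc k)"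
proof -
  have "(\<Sum>i<d. (l(j := Suc (l j))) i) = Suc (\<Sum>i<d. l i)"
    using sum_upd[OF j, of l "Suc (l j)"] sum_split[OF j, of l] by simp
  then show ?thesis using l j unfolding simplex_def by auto
qed

lemma down_simplex: assumes r: "r \<in> S (Suc k)" and i: "i < d" and p: "0 < r i"
  shows "r(i := r i - 1) \<in> S k"
proof -
  have "(\<Sum>j<d. (r(i := r i - 1)) j) = (r i - 1) + (\<Sum>j\<in>{..<d}-{i}. r j)" by (rule sum_upd[OF i])
  moreover have "(\<Sum>j<d. r j) = r i + (\<Sum>j\<in>{..<d}-{i}. r j)" by (rule sum_split[OF i])
  ultimately have "(\<Sum>j<d. (r(i := r i - 1)) j) = k" using r p unfolding simplex_def by simp
  then show ?thesis using r i unfolding simplex_def by auto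
qed

lemma AAk_pos: "0 < AA + real k" using AA_pos by simp

lemma LINr_U: "LINr (Suc k) k (Uop k)"
  unfolding LINr_def Uop_def by (simp add: sum.distrib sum_distrib_left algebra_simps)

lemma LINr_D: "LINr k (Suc k) (Dop k)"
  unfolding LINr_def Dop_def by (simp add: sum.distrib sum_distrib_left algebra_simps)

lemma RESP_U: "RESP (Suc k) k (Uop k)"
  unfolding RESP_def Uop_def
proof (intro allI impI ballI)
  fix f g :: "(nat\<Rightarrow>nat)\<Rightarrow>real" and l
  assume e: "\<forall>r\<in>S (Suc k). f r = g r" and l: "l \<in> S k"
  show "(\<Sum>j<d. (\<alpha> j + real (l j)) / (AA + real k) * f (l(j := Suc (l j)))) =
        (\<Sum>j<d. (\<alpha> j + real (l j)) / (AA + real k) * g (l(j := Suc (l j))))"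
    using e up_simplex[OF l] by (intro sum.cong) auto
qed

lemma RESP_D': "RESP k (Suc k) (Dop k)"
  unfolding RESP_def Dop_def
proof (intro allI impI ballI)
  fix f g :: "(nat\<Rightarrow>nat)\<Rightarrow>real" and r
  assume e: "\<forall>r\<in>S k. f r = g r" and r: "r \<in> S (Suc k)"
  show "(\<Sum>i<d. real (r i) / real (Suc k) * f (r(i := r i - 1))) =
        (\<Sum>i<d. real (r i) / real (Suc k) * g (r(i := r i - 1)))"
  proof (intro sum.cong refl)
    fix i assume i: "i \<in> {..<d}"
    show "real (r i) / real (Suc k) * f (r(i := r i - 1)) = real (r i) / real (Suc k) * g (r(i := r i - 1))"
    proof (cases "r i = 0")
      case False
      then show ?thesis using e down_simplex[OF r _ ] i by auto
    qed simp
  qed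
qed

lemma POS_U: "POS (Suc k) k (Uop k)"
  unfolding POS_def Uop_def
proof (intro allI impI ballI)
  fix f :: "(nat\<Rightarrow>nat)\<Rightarrow>real" and l
  assume f: "\<forall>r\<in>S (Suc k). 0 \<le> f r" and l: "l \<in> S k"
  show "0 \<le> (\<Sum>j<d. (\<alpha> j + real (l j)) / (AA + real k) * f (l(j := Suc (l j))))"
  proof (intro sum_nonneg mult_nonneg_nonneg divide_nonneg_pos)
    fix j assume j: "j \<in> {..<d}"
    show "0 \<le> \<alpha> j + real (l j)" using apos[of j] j by simp
    show "0 < AA + real k" by (rule AAk_pos)
    show "0 \<le> f (l(j := Suc (l j)))" using f up_simplex[OF l] j by simp
  qed
qed

lemma POS_D: "POS k (Suc k) (Dop k)"
  unfolding POS_def Dop_def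
proof (intro allI impI ballI)
  fix f :: "(nat\<Rightarrow>nat)\<Rightarrow>real" and r
  assume f: "\<forall>r\<in>S k. 0 \<le> f r" and r: "r \<in> S (Suc k)"
  show "0 \<le> (\<Sum>i<d. real (r i) / real (Suc k) * f (r(i := r i - 1)))"
  proof (intro sum_nonneg)
    fix i assume i: "i \<in> {..<d}"
    show "0 \<le> real (r i) / real (Suc k) * f (r(i := r i - 1))"
    proof (cases "r i = 0")
      case False
      then have "0 \<le> f (r(i := r i - 1))" using f down_simplex[OF r] i by auto
      then show ?thesis by simp
    qed simp
  qed
qed

lemma falling_Suc': "falling c (Suc k) = c * falling (c - 1) k"
  unfolding falling_def by (subst prod.lessThan_Suc_shift) (simp add: algebra_simps)

lemma falling_shift: "falling (c + 1) k = falling c k + real k * falling c (k - 1)"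
proof (cases k)
  case 0 then show ?thesis by simp
next
  case (Suc k')
  have "falling (c + 1) (Suc k') = (c + 1) * falling c k'" using falling_Suc'[of "c+1" k'] by simp
  moreover have "falling c (Suc k') = falling c k' * (c - real k')" by (rule falling_Suc)
  ultimately show ?thesis using Suc by (simp add: algebra_simps)
qed

lemma ff_up: assumes j: "j < d"
  shows "ff c (l(j := Suc (l j))) = ff c l + real (c j) * ff (c(j := c j - 1)) l"
proof -
  define R where "R = (\<Prod>i\<in>{..<d}-{j}. falling (real (l i)) (c i))"
  have 1: "ff c (l(j := Suc (l j))) = falling (real (Suc (l j))) (c j) * R"
    unfolding ff_def R_def using prod_upd[OF j, of "\<lambda>i y. falling (real y) (c i)" l] by simp
  have 2: "ff c l = falling (real (l j)) (c j) * R"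
    unfolding ff_def R_def using prod_split[OF j, of "\<lambda>i y. falling (real y) (c i)" l] by simp
  have 3: "ff (c(j := c j - 1)) l = falling (real (l j)) (c j - 1) * R"
    unfolding ff_def R_def using prod_upd[OF j, of "\<lambda>i e. falling (real (l i)) e" c] by simp
  show ?thesis unfolding 1 2 3 using falling_shift[of "real (l j)" "c j"] by (simp add: algebra_simps)
qed

lemma ff_up2: assumes j: "j < d"
  shows "real (c j) * ((\<alpha> j + real (l j)) * ff (c(j := c j - 1)) l)
       = real (c j) * ff c l + real (c j) * (\<alpha> j + real (c j) - 1) * ff (c(j := c j - 1)) l"
proof (cases "c j = 0")
  case False
  define b where "b = c(j := c j - 1)"
  have cb: "c = b(j := Suc (b j))" unfolding b_def using False by (simp add: fun_eq_iff)
  have bj: "real (b j) = real (c j) - 1" unfolding b_def using False by simp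
  have "real (l j) * ff b l = ff c l + real (b j) * ff b l" using coord_ff[OF j, of l b] cb by simp
  then have H: "real (l j) * ff b l = ff c l + (real (c j) - 1) * ff b l" using bj by simp
  have "real (c j) * ((\<alpha> j + real (l j)) * ff b l) = real (c j) * \<alpha> j * ff b l + real (c j) * (real (l j) * ff b l)"
    by (simp add: algebra_simps)
  also have "\<dots> = real (c j) * \<alpha> j * ff b l + real (c j) * (ff c l + (real (c j) - 1) * ff b l)"
    by (simp only: H)
  also have "\<dots> = real (c j) * ff c l + real (c j) * (\<alpha> j + real (c j) - 1) * ff b l"
    by (simp add: algebra_simps)
  finally show ?thesis unfolding b_def .
qed simp

lemma sum_real_simplex: "r \<in> S k \<Longrightarrow> (\<Sum>i<d. real (r i)) = real k"
  unfolding simplex_def by (simp flip: of_nat_sum)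

lemma TRI_U: "TRI (Suc k) k (Uop k) (\<lambda>n. (AA + real k + real n) / (AA + real k))"
  unfolding TRI_def
proof (intro allI impI)
  fix c :: "nat \<Rightarrow> nat" assume cs: "\<forall>i\<ge>d. c i = 0"
  define G where "G j = (if c j = 0 then (\<lambda>_. 0) else ff (c(j := c j - 1)))" for j
  define h where "h = (\<lambda>l. \<Sum>j<d. (real (c j) * (\<alpha> j + real (c j) - 1) / (AA + real k)) * G j l)"
  have Gs: "G j \<in> spanset k ff (monsl (dg c))" if j: "j \<in> {..<d}" for j
  proof (cases "c j = 0")
    case True then show ?thesis unfolding G_def by (simp add: spanset_zero)
  next
    case False
    have "(\<Sum>i<d. (c(j := c j - 1)) i) = (c j - 1) + (\<Sum>i\<in>{..<d}-{j}. c i)" using j by (intro sum_upd) simp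
    moreover have "(\<Sum>i<d. c i) = c j + (\<Sum>i\<in>{..<d}-{j}. c i)" using j by (intro sum_split) simp
    ultimately have "c(j := c j - 1) \<in> monsl (dg c)" using False cs j unfolding monsl_def dg_def by auto
    then show ?thesis unfolding G_def using False by (simp add: spanset_mem finite_monsl)
  qed
  have hs: "h \<in> spanset k ff (monsl (dg c))" unfolding h_def
    using Gs by (intro spanset_sum) auto
  have "\<forall>l\<in>S k. Uop k (ff c) l = (AA + real k + real (dg c)) / (AA + real k) * ff c l + h l"
  proof
    fix l assume l: "l \<in> S k"
    have t: "(\<alpha> j + real (l j)) / (AA + real k) * ff c (l(j := Suc (l j)))
       = (\<alpha> j + real (l j)) / (AA + real k) * ff c l + real (c j) / (AA + real k) * ff c l
         + (real (c j) * (\<alpha> j + real (c j) - 1) / (AA + real k)) * G j l" if j: "j \<in> {..<d}" for j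
    proof -
      have g: "real (c j) * (\<alpha> j + real (c j) - 1) * ff (c(j := c j - 1)) l = real (c j) * (\<alpha> j + real (c j) - 1) * G j l"
        unfolding G_def by simp
      have jd: "j < d" using j by simp
      define A where "A = AA + real k"
      define fb where "fb = ff (c(j := c j - 1)) l"
      have "(\<alpha> j + real (l j)) / A * ff c (l(j := Suc (l j))) = (\<alpha> j + real (l j)) / A * (ff c l + real (c j) * fb)"
        unfolding fb_def using ff_up[OF jd, of c l] by simp
      also have "\<dots> = (\<alpha> j + real (l j)) / A * ff c l + (real (c j) * ((\<alpha> j + real (l j)) * fb)) / A"
        by (simp add: algebra_simps)
      also have "real (c j) * ((\<alpha> j + real (l j)) * fb) = real (c j) * ff c l + real (c j) * (\<alpha> j + real (c j) - 1) * G j l"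
        unfolding fb_def using ff_up2[OF jd, of c l] g by simp
      also have "(\<alpha> j + real (l j)) / A * ff c l + (real (c j) * ff c l + real (c j) * (\<alpha> j + real (c j) - 1) * G j l) / A
          = (\<alpha> j + real (l j)) / A * ff c l + real (c j) / A * ff c l + (real (c j) * (\<alpha> j + real (c j) - 1) / A) * G j l"
        by (simp add: add_divide_distrib)
      finally show ?thesis unfolding A_def .
    qed
    have "Uop k (ff c) l = (\<Sum>j<d. (\<alpha> j + real (l j)) / (AA + real k) * ff c l + real (c j) / (AA + real k) * ff c l
         + (real (c j) * (\<alpha> j + real (c j) - 1) / (AA + real k)) * G j l)"
      unfolding Uop_def using t by (intro sum.cong) auto
    also have "\<dots> = (\<Sum>j<d. \<alpha> j + real (l j)) / (AA + real k) * ff c l + (\<Sum>j<d. real (c j)) / (AA + real k) * ff c l + h l"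
    proof -
      have s1: "(\<Sum>j<d. (\<alpha> j + real (l j)) / (AA + real k) * ff c l) = (\<Sum>j<d. \<alpha> j + real (l j)) / (AA + real k) * ff c l"
        by (simp add: sum_distrib_right sum_divide_distrib)
      have s2: "(\<Sum>j<d. real (c j) / (AA + real k) * ff c l) = (\<Sum>j<d. real (c j)) / (AA + real k) * ff c l"
        by (simp add: sum_distrib_right sum_divide_distrib)
      show ?thesis unfolding h_def sum.distrib s1 s2 ..
    qed
    also have "(\<Sum>j<d. \<alpha> j + real (l j)) = AA + real k"
      using sum_real_simplex[OF l] by (simp add: sum.distrib abs_alpha_def)
    also have "(\<Sum>j<d. real (c j)) = real (dg c)" unfolding dg_def by simp
    finally show "Uop k (ff c) l = (AA + real k + real (dg c)) / (AA + real k) * ff c l + h l"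
      by (simp add: field_simps)
  qed
  then show "\<exists>h\<in>spanset k ff (monsl (dg c)). \<forall>r\<in>S k. Uop k (ff c) r = (AA + real k + real (dg c)) / (AA + real k) * ff c r + h r"
    using hs by blast
qed

lemma ff_down: assumes i: "i < d"
  shows "real (r i) * ff c (r(i := r i - 1)) = ff c r * (real (r i) - real (c i))"
proof -
  define R where "R = (\<Prod>j\<in>{..<d}-{i}. falling (real (r j)) (c j))"
  have 1: "ff c (r(i := r i - 1)) = falling (real (r i - 1)) (c i) * R"
    unfolding ff_def R_def using prod_upd[OF i, of "\<lambda>j y. falling (real y) (c j)" r] by simp
  have 2: "ff c r = falling (real (r i)) (c i) * R"
    unfolding ff_def R_def using prod_split[OF i, of "\<lambda>j y. falling (real y) (c j)" r] by simp
  show ?thesis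
  proof (cases "r i = 0")
    case True
    then show ?thesis unfolding 2 using falling_zero[of 0 "c i"] by (cases "c i = 0") auto
  next
    case False
    then have "real (r i - 1) = real (r i) - 1" by simp
    then have "real (r i) * falling (real (r i - 1)) (c i) = falling (real (r i)) (c i) * (real (r i) - real (c i))"
      using falling_Suc'[of "real (r i)" "c i"] falling_Suc[of "real (r i)" "c i"] by simp
    then have H: "real (r i) * falling (real (r i - 1)) (c i) = falling (real (r i)) (c i) * (real (r i) - real (c i))" .
    have "real (r i) * (falling (real (r i - 1)) (c i) * R) = (real (r i) * falling (real (r i - 1)) (c i)) * R"
      by (simp add: mult.assoc)
    also have "\<dots> = (falling (real (r i)) (c i) * (real (r i) - real (c i))) * R" by (simp only: H)
    also have "\<dots> = falling (real (r i)) (c i) * R * (real (r i) - real (c i))" by (simp add: ac_simps)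
    finally show ?thesis unfolding 1 2 .
  qed
qed

lemma TRI_D: "TRI k (Suc k) (Dop k) (\<lambda>n. (real (Suc k) - real n) / real (Suc k))"
  unfolding TRI_def
proof (intro allI impI)
  fix c :: "nat \<Rightarrow> nat" assume cs: "\<forall>i\<ge>d. c i = 0"
  have "\<forall>r\<in>S (Suc k). Dop k (ff c) r = (real (Suc k) - real (dg c)) / real (Suc k) * ff c r + 0"
  proof
    fix r assume r: "r \<in> S (Suc k)"
    have "Dop k (ff c) r = (\<Sum>i<d. ff c r * (real (r i) - real (c i)) / real (Suc k))"
      unfolding Dop_def using ff_down by (intro sum.cong) (auto simp: field_simps)
    also have "\<dots> = ff c r * ((\<Sum>i<d. real (r i)) - (\<Sum>i<d. real (c i))) / real (Suc k)"
      by (simp add: sum_divide_distrib[symmetric] sum_distrib_left[symmetric] sum_subtractf)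
    also have "(\<Sum>i<d. real (r i)) = real (Suc k)" by (rule sum_real_simplex[OF r])
    also have "(\<Sum>i<d. real (c i)) = real (dg c)" unfolding dg_def by simp
    finally show "Dop k (ff c) r = (real (Suc k) - real (dg c)) / real (Suc k) * ff c r + 0" by simp
  qed
  then show "\<exists>h\<in>spanset (Suc k) ff (monsl (dg c)). \<forall>r\<in>S (Suc k). Dop k (ff c) r = (real (Suc k) - real (dg c)) / real (Suc k) * ff c r + h r"
    by (intro bexI[of _ "\<lambda>r. 0"]) (simp_all add: spanset_zero)
qed

lemma DM_up: assumes l: "l \<in> S k" and j: "j < d"
  shows "DM d \<alpha> (Suc k) (l(j := Suc (l j))) * real (Suc (l j)) / real (Suc k)
       = DM d \<alpha> k l * (\<alpha> j + real (l j)) / (AA + real k)"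
proof -
  define Rf where "Rf = (\<Prod>i\<in>{..<d}-{j}. fact (l i) :: real)"
  define Rp where "Rp = (\<Prod>i\<in>{..<d}-{j}. pochhammer (\<alpha> i) (l i))"
  have f1: "(\<Prod>i<d. fact ((l(j := Suc (l j))) i) :: real) = fact (Suc (l j)) * Rf"
    unfolding Rf_def using prod_upd[OF j, of "\<lambda>i y. fact y :: real" l] by simp
  have f2: "(\<Prod>i<d. fact (l i) :: real) = fact (l j) * Rf"
    unfolding Rf_def using prod_split[OF j, of "\<lambda>i y. fact y :: real" l] by simp
  have p1: "(\<Prod>i<d. pochhammer (\<alpha> i) ((l(j := Suc (l j))) i)) = pochhammer (\<alpha> j) (Suc (l j)) * Rp"
    unfolding Rp_def using prod_upd[OF j, of "\<lambda>i y. pochhammer (\<alpha> i) y" l] by simp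
  have p2: "(\<Prod>i<d. pochhammer (\<alpha> i) (l i)) = pochhammer (\<alpha> j) (l j) * Rp"
    unfolding Rp_def using prod_split[OF j, of "\<lambda>i y. pochhammer (\<alpha> i) y" l] by simp
  have Rfpos: "0 < Rf" unfolding Rf_def by (rule prod_pos) simp
  have pA: "0 < pochhammer AA k" using AA_pos by (rule pochhammer_pos)
  have Ak: "0 < AA + real k" by (rule AAk_pos)
  define K where "K = real (Suc k)"
  define Lq where "Lq = real (Suc (l j))"
  define fl where "fl = (fact (l j) :: real)"
  define fk where "fk = (fact k :: real)"
  define pj where "pj = pochhammer (\<alpha> j) (l j)"
  define pAA where "pAA = pochhammer AA k"
  define A where "A = AA + real k"
  have e1: "(fact (Suc k)::real) = K * fk" unfolding K_def fk_def by (simp only: fact_Suc)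
  have e2: "(fact (Suc (l j))::real) = Lq * fl" unfolding Lq_def fl_def by (simp only: fact_Suc)
  have e3: "pochhammer (\<alpha> j) (Suc (l j)) = pj * (\<alpha> j + real (l j))" unfolding pj_def by (simp add: pochhammer_Suc)
  have e4: "pochhammer AA (Suc k) = pAA * A" unfolding pAA_def A_def by (simp add: pochhammer_Suc)
  have pos: "0 < K" "0 < Lq" "0 < fl" "0 < fk" "0 < pAA" "0 < A"
    unfolding K_def Lq_def fl_def fk_def pAA_def A_def using pA Ak by auto
  show ?thesis
    unfolding DM_def f1 f2 p1 p2 e1 e2 e3 e4 fl_def[symmetric] fk_def[symmetric] pj_def[symmetric]
      pAA_def[symmetric] A_def[symmetric] K_def[symmetric] Lq_def[symmetric]
    using Rfpos pos by (simp add: field_simps)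
qed

lemma ADJ_UD: "ip d \<alpha> (Suc k) (Dop k g) f = ip d \<alpha> k g (Uop k f)"
proof -
  define F where "F = (\<lambda>(r, i). DM d \<alpha> (Suc k) r * (real (r i) / real (Suc k) * g (r(i := r i - 1))) * f r)"
  define \<phi> where "\<phi> = (\<lambda>(l::nat\<Rightarrow>nat, j::nat). (l(j := Suc (l j)), j))"
  define P where "P = {x \<in> S (Suc k) \<times> {..<d}. 0 < fst x (snd x)}"
  have fin1: "finite (S (Suc k) \<times> {..<d})" using finite_simplex by simp
  have "ip d \<alpha> (Suc k) (Dop k g) f = (\<Sum>r\<in>S (Suc k). \<Sum>i<d. F (r, i))"
    unfolding ip_def Dop_def F_def by (simp add: sum_distrib_left sum_distrib_right ac_simps)
  also have "\<dots> = (\<Sum>x\<in>S (Suc k) \<times> {..<d}. F x)"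
    by (subst sum.Sigma) (auto simp: finite_simplex)
  also have "\<dots> = (\<Sum>x\<in>P. F x)"
  proof (rule sum.mono_neutral_right[OF fin1])
    show "P \<subseteq> S (Suc k) \<times> {..<d}" unfolding P_def by auto
    show "\<forall>x\<in>S (Suc k) \<times> {..<d} - P. F x = 0" unfolding P_def F_def by auto
  qed
  also have "P = \<phi> ` (S k \<times> {..<d})"
  proof
    show "\<phi> ` (S k \<times> {..<d}) \<subseteq> P"
      unfolding P_def \<phi>_def using up_simplex by auto
    show "P \<subseteq> \<phi> ` (S k \<times> {..<d})"
    proof
      fix x assume x: "x \<in> P"
      obtain r i where xr: "x = (r, i)" by (cases x)
      have r: "r \<in> S (Suc k)" and i: "i < d" and ri: "0 < r i" using x xr unfolding P_def by auto
      have "r(i := r i - 1) \<in> S k" by (rule down_simplex[OF r i ri])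
      moreover have "\<phi> (r(i := r i - 1), i) = x" unfolding \<phi>_def xr using ri by (simp add: fun_eq_iff)
      ultimately show "x \<in> \<phi> ` (S k \<times> {..<d})" using i by force
    qed
  qed
  also have "(\<Sum>x\<in>\<phi> ` (S k \<times> {..<d}). F x) = (\<Sum>x\<in>S k \<times> {..<d}. F (\<phi> x))"
  proof (rule sum.reindex[unfolded comp_def])
    show "inj_on \<phi> (S k \<times> {..<d})"
    proof (rule inj_onI)
      fix x y assume "x \<in> S k \<times> {..<d}" "y \<in> S k \<times> {..<d}" and e: "\<phi> x = \<phi> y"
      obtain l j where x: "x = (l, j)" by (cases x)
      obtain l2 j2 where y: "y = (l2, j2)" by (cases y)
      have jj: "j = j2" using e unfolding x y \<phi>_def by simp
      have ee: "l(j := Suc (l j)) = l2(j := Suc (l2 j))" using e unfolding x y \<phi>_def jj by simp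
      have "l = l2"
      proof
        fix i show "l i = l2 i" using fun_cong[OF ee, of i] by (cases "i = j") auto
      qed
      then show "x = y" using x y jj by simp
    qed
  qed
  also have "\<dots> = (\<Sum>x\<in>S k \<times> {..<d}. (case x of (l, j) \<Rightarrow> DM d \<alpha> k l * g l * ((\<alpha> j + real (l j)) / (AA + real k) * f (l(j := Suc (l j))))))"
  proof (intro sum.cong refl)
    fix x assume x: "x \<in> S k \<times> {..<d}"
    obtain l j where xl: "x = (l, j)" by (cases x)
    have l: "l \<in> S k" and j: "j < d" using x xl by auto
    have "F (\<phi> x) = (DM d \<alpha> (Suc k) (l(j := Suc (l j))) * real (Suc (l j)) / real (Suc k)) * g l * f (l(j := Suc (l j)))"
      unfolding F_def \<phi>_def xl by simp
    also have "\<dots> = DM d \<alpha> k l * (\<alpha> j + real (l j)) / (AA + real k) * g l * f (l(j := Suc (l j)))"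
      unfolding DM_up[OF l j] ..
    finally show "F (\<phi> x) = (case x of (l, j) \<Rightarrow> DM d \<alpha> k l * g l * ((\<alpha> j + real (l j)) / (AA + real k) * f (l(j := Suc (l j)))))"
      unfolding xl by simp
  qed
  also have "\<dots> = (\<Sum>l\<in>S k. \<Sum>j<d. DM d \<alpha> k l * g l * ((\<alpha> j + real (l j)) / (AA + real k) * f (l(j := Suc (l j)))))"
    by (subst sum.Sigma) (auto simp: finite_simplex)
  also have "\<dots> = ip d \<alpha> k g (Uop k f)"
    unfolding ip_def Uop_def by (simp add: sum_distrib_left)
  finally show ?thesis .
qed

end

context hs begin

primrec UU :: "nat \<Rightarrow> nat \<Rightarrow> ((nat\<Rightarrow>nat)\<Rightarrow>real) \<Rightarrow> ((nat\<Rightarrow>nat)\<Rightarrow>real)" where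
  "UU a 0 f = f"
| "UU a (Suc t) f = Uop a (UU (Suc a) t f)"

primrec DD :: "nat \<Rightarrow> nat \<Rightarrow> ((nat\<Rightarrow>nat)\<Rightarrow>real) \<Rightarrow> ((nat\<Rightarrow>nat)\<Rightarrow>real)" where
  "DD a 0 g = g"
| "DD a (Suc t) g = Dop (a + t) (DD a t g)"

lemma TRI_cong: "TRI a b T lam \<Longrightarrow> (\<And>n. lam n = lam' n) \<Longrightarrow> TRI a b T lam'"
  unfolding TRI_def by simp

lemma LINr_id: "LINr a a (\<lambda>f. f)" unfolding LINr_def by simp
lemma RESP_id: "RESP a a (\<lambda>f. f)" unfolding RESP_def by simp
lemma POS_id: "POS a a (\<lambda>f. f)" unfolding POS_def by simp
lemma TRI_id: "TRI a a (\<lambda>f. f) (\<lambda>n. 1)"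
  unfolding TRI_def by (auto intro!: bexI[of _ "\<lambda>r. 0"] spanset_zero)

definition lamU :: "nat \<Rightarrow> nat \<Rightarrow> nat \<Rightarrow> real" where
  "lamU a t n = (\<Prod>i<t. (AA + real (a + i) + real n) / (AA + real (a + i)))"
definition lamD :: "nat \<Rightarrow> nat \<Rightarrow> nat \<Rightarrow> real" where
  "lamD a t n = (\<Prod>i<t. (real (Suc (a + i)) - real n) / real (Suc (a + i)))"

lemma UU_props: "LINr (a + t) a (UU a t) \<and> RESP (a + t) a (UU a t) \<and> POS (a + t) a (UU a t)
   \<and> TRI (a + t) a (UU a t) (lamU a t)"
proof (induction t arbitrary: a)
  case 0
  have e: "UU a 0 = (\<lambda>f. f)" by (simp add: fun_eq_iff)
  have l: "lamU a 0 = (\<lambda>n. 1)" unfolding lamU_def by (simp add: fun_eq_iff)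
  show ?case unfolding e l using LINr_id RESP_id POS_id TRI_id by simp
next
  case (Suc t)
  have e: "UU a (Suc t) = (\<lambda>f. Uop a (UU (Suc a) t f))" by (simp add: fun_eq_iff)
  have lv: "Suc a + t = a + Suc t" by simp
  from Suc.IH[of "Suc a"] have IH: "LINr (a + Suc t) (Suc a) (UU (Suc a) t)" "RESP (a + Suc t) (Suc a) (UU (Suc a) t)"
    "POS (a + Suc t) (Suc a) (UU (Suc a) t)" "TRI (a + Suc t) (Suc a) (UU (Suc a) t) (lamU (Suc a) t)"
    unfolding lv by auto
  have lam: "lamU (Suc a) t n * ((AA + real a + real n) / (AA + real a)) = lamU a (Suc t) n" for n
    unfolding lamU_def prod.lessThan_Suc_shift by (simp add: ac_simps)
  show ?case unfolding e
    using comp_LINr[OF IH(1) LINr_U RESP_U] comp_RESP[OF IH(2) RESP_U] comp_POS[OF IH(3) POS_U]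
      TRI_cong[OF comp_TRI[OF IH(4) TRI_U LINr_U RESP_U] lam] by simp
qed

lemma DD_props: "LINr a (a + t) (DD a t) \<and> RESP a (a + t) (DD a t) \<and> POS a (a + t) (DD a t)
   \<and> TRI a (a + t) (DD a t) (lamD a t)"
proof (induction t)
  case 0
  have e: "DD a 0 = (\<lambda>f. f)" by (simp add: fun_eq_iff)
  have l: "lamD a 0 = (\<lambda>n. 1)" unfolding lamD_def by (simp add: fun_eq_iff)
  show ?case unfolding e l using LINr_id RESP_id POS_id TRI_id by simp
next
  case (Suc t)
  have e: "DD a (Suc t) = (\<lambda>f. Dop (a + t) (DD a t f))" by (simp add: fun_eq_iff)
  have lv: "Suc (a + t) = a + Suc t" by simp
  have lam: "lamD a t n * ((real (Suc (a + t)) - real n) / real (Suc (a + t))) = lamD a (Suc t) n" for n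
    unfolding lamD_def by (simp add: prod.lessThan_Suc)
  have "LINr a (Suc (a + t)) (\<lambda>f. Dop (a + t) (DD a t f)) \<and> RESP a (Suc (a + t)) (\<lambda>f. Dop (a + t) (DD a t f))
     \<and> POS a (Suc (a + t)) (\<lambda>f. Dop (a + t) (DD a t f)) \<and> TRI a (Suc (a + t)) (\<lambda>f. Dop (a + t) (DD a t f)) (lamD a (Suc t))"
    using Suc.IH comp_LINr[OF _ LINr_D RESP_D'] comp_RESP[OF _ RESP_D'] comp_POS[OF _ POS_D]
      TRI_cong[OF comp_TRI[OF _ TRI_D LINr_D RESP_D'] lam] by blast
  then show ?case unfolding e lv .
qed

lemma UU_Suc': "UU a (Suc t) f = UU a t (Uop (a + t) f)"
proof (induction t arbitrary: a)
  case 0 then show ?case by simp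
next
  case (Suc t)
  have "UU a (Suc (Suc t)) f = Uop a (UU (Suc a) (Suc t) f)" by simp
  also have "\<dots> = Uop a (UU (Suc a) t (Uop (Suc a + t) f))" using Suc.IH by simp
  also have "\<dots> = UU a (Suc t) (Uop (a + Suc t) f)" by simp
  finally show ?case .
qed

lemma ADJ_iter: "ip d \<alpha> (a + t) (DD a t g) f = ip d \<alpha> a g (UU a t f)"
proof (induction t arbitrary: f)
  case 0 then show ?case by simp
next
  case (Suc t)
  have "ip d \<alpha> (a + Suc t) (DD a (Suc t) g) f = ip d \<alpha> (Suc (a + t)) (Dop (a + t) (DD a t g)) f" by simp
  also have "\<dots> = ip d \<alpha> (a + t) (DD a t g) (Uop (a + t) f)" by (rule ADJ_UD)
  also have "\<dots> = ip d \<alpha> a g (UU a t (Uop (a + t) f))" by (rule Suc.IH)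
  also have "\<dots> = ip d \<alpha> a g (UU a (Suc t) f)" by (simp only: UU_Suc')
  finally show ?case .
qed

end

lemma lim_ratio:
  fixes c1 c2 :: real assumes c2: "0 < c2"
  shows "(\<lambda>s::nat. (c1 + real s)/(c2 + real s)) \<longlonglongrightarrow> 1"
proof -
  have fl: "filterlim (\<lambda>s::nat. c2 + real s) at_infinity sequentially"
    by (rule filterlim_at_top_imp_at_infinity, rule filterlim_tendsto_add_at_top[OF tendsto_const filterlim_real_sequentially])
  have "(\<lambda>s::nat. (c1 - c2) / (c2 + real s)) \<longlonglongrightarrow> 0"
    by (rule tendsto_divide_0[OF tendsto_const fl])
  then have "(\<lambda>s::nat. 1 + (c1 - c2) / (c2 + real s)) \<longlonglongrightarrow> 1 + 0"
    by (intro tendsto_add tendsto_const)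
  moreover have "(\<lambda>s::nat. 1 + (c1 - c2) / (c2 + real s)) = (\<lambda>s. (c1 + real s)/(c2 + real s))"
  proof
    fix s :: nat have "c2 + real s \<noteq> 0" using c2 by simp
    then show "1 + (c1 - c2) / (c2 + real s) = (c1 + real s)/(c2 + real s)" by (simp add: field_simps)
  qed
  ultimately show ?thesis by simp
qed

context hs begin

lemma poch_step: assumes "0 < x" shows "pochhammer (x + 1) n = pochhammer x n * (x + real n) / x"
proof -
  have "x * pochhammer (x + 1) n = pochhammer x n * (x + real n)"
    using pochhammer_rec[of x n] pochhammer_Suc[of x n] by simp
  then show ?thesis using assms by (simp add: field_simps)
qed

lemma lamU_eq: "lamU a t n = pochhammer (AA + real (a + t)) n / pochhammer (AA + real a) n"
proof (induction t)
  case 0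
  have "0 < pochhammer (AA + real a) n" using AA_pos by (intro pochhammer_pos) simp
  then show ?case unfolding lamU_def by simp
next
  case (Suc t)
  define x where "x = AA + real (a + t)"
  have x: "0 < x" unfolding x_def using AA_pos by simp
  have "lamU a (Suc t) n = lamU a t n * ((x + real n) / x)"
    unfolding lamU_def x_def by (simp add: prod.lessThan_Suc)
  also have "\<dots> = pochhammer x n / pochhammer (AA + real a) n * ((x + real n) / x)"
    unfolding Suc.IH x_def ..
  also have "\<dots> = pochhammer (x + 1) n / pochhammer (AA + real a) n"
    unfolding poch_step[OF x] by simp
  also have "x + 1 = AA + real (a + Suc t)" unfolding x_def by simp
  finally show ?case .
qed

lemma falling_step: "falling (y + 1) n * (y + 1 - real n) = (y + 1) * falling y n"
  using falling_Suc'[of "y + 1" n] falling_Suc[of "y + 1" n] by simp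

lemma lamD_eq: "lamD a t n * falling (real (a + t)) n = falling (real a) n"
proof (induction t)
  case 0 then show ?case unfolding lamD_def by simp
next
  case (Suc t)
  define y where "y = real (a + t)"
  have y: "0 < y + 1" unfolding y_def by simp
  have "lamD a (Suc t) n * falling (real (a + Suc t)) n
      = lamD a t n * ((y + 1 - real n) / (y + 1)) * falling (y + 1) n"
    unfolding lamD_def y_def by (simp add: prod.lessThan_Suc add_ac)
  also have "\<dots> = lamD a t n * ((falling (y + 1) n * (y + 1 - real n)) / (y + 1))"
    by (simp add: field_simps)
  also have "\<dots> = lamD a t n * falling y n" unfolding falling_step using y by simp
  also have "\<dots> = falling (real a) n" unfolding y_def by (rule Suc.IH)
  finally show ?case .
qed

lemma falling_pos: "n \<le> N \<Longrightarrow> 0 < falling (real N) n"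
  unfolding falling_def by (rule prod_pos) auto

lemma hpds_op2:
  assumes L: "LINr N N T" and R: "RESP N N T" and P: "POS N N T"
    and eig: "\<And>n P. n \<le> N \<Longrightarrow> P \<in> orth_polys d \<alpha> N n \<Longrightarrow> \<forall>r\<in>S N. T P r = \<rho> n * P r"
    and r0: "\<rho> 0 = 1"
  shows "HPDS d \<alpha> N \<rho>"
proof (rule hpds_op[where T=T and N=N and \<rho>=\<rho>])
  fix n P assume "n \<le> N" "P \<in> orth_polys d \<alpha> N n"
  then show "\<forall>r\<in>S N. T P r = \<rho> n * P r" by (rule eig)
next
  show "\<rho> 0 = 1" by (rule r0)
next
  fix X :: "(nat\<times>nat) set" and c g assume "finite X"
  then show "\<forall>r\<in>S N. T (\<lambda>r. \<Sum>x\<in>X. c x * g x r) r = (\<Sum>x\<in>X. c x * T (g x) r)" by (rule LIN_sum[OF L])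
next
  fix f g :: "(nat\<Rightarrow>nat)\<Rightarrow>real" assume "\<forall>r\<in>S N. f r = g r"
  then show "\<forall>r\<in>S N. T f r = T g r" using R unfolding RESP_def by blast
next
  fix f :: "(nat\<Rightarrow>nat)\<Rightarrow>real" assume "\<forall>r\<in>S N. 0 \<le> f r"
  then show "\<forall>r\<in>S N. 0 \<le> T f r" using P unfolding POS_def by blast
qed

end

context hs begin

definition Zop :: "nat \<Rightarrow> nat \<Rightarrow> ((nat\<Rightarrow>nat)\<Rightarrow>real) \<Rightarrow> ((nat\<Rightarrow>nat)\<Rightarrow>real)" where
  "Zop m t f = DD m t (UU m t f)"
definition Wop :: "nat \<Rightarrow> nat \<Rightarrow> ((nat\<Rightarrow>nat)\<Rightarrow>real) \<Rightarrow> ((nat\<Rightarrow>nat)\<Rightarrow>real)" where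
  "Wop N s f = UU N s (DD N s f)"

lemma Z_props:
  "LINr (m+t) (m+t) (Zop m t) \<and> RESP (m+t) (m+t) (Zop m t) \<and> POS (m+t) (m+t) (Zop m t)
   \<and> TRI (m+t) (m+t) (Zop m t) (\<lambda>n. lamU m t n * lamD m t n)"
proof -
  have U: "LINr (m + t) m (UU m t)" "RESP (m + t) m (UU m t)" "POS (m + t) m (UU m t)" "TRI (m + t) m (UU m t) (lamU m t)"
    using UU_props[of m t] by auto
  have D: "LINr m (m + t) (DD m t)" "RESP m (m + t) (DD m t)" "POS m (m + t) (DD m t)" "TRI m (m + t) (DD m t) (lamD m t)"
    using DD_props[of m t] by auto
  have e: "Zop m t = (\<lambda>f. DD m t (UU m t f))" unfolding Zop_def by (simp add: fun_eq_iff)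
  show ?thesis unfolding e
    using comp_LINr[OF U(1) D(1) D(2)] comp_RESP[OF U(2) D(2)] comp_POS[OF U(3) D(3)]
      comp_TRI[OF U(4) D(4) D(1) D(2)] by simp
qed

lemma Z_sa: "ip d \<alpha> (m+t) (Zop m t f) g = ip d \<alpha> (m+t) f (Zop m t g)"
proof -
  have "ip d \<alpha> (m+t) (Zop m t f) g = ip d \<alpha> m (UU m t f) (UU m t g)" unfolding Zop_def by (rule ADJ_iter)
  moreover have "ip d \<alpha> (m+t) f (Zop m t g) = ip d \<alpha> m (UU m t g) (UU m t f)"
    unfolding Zop_def by (subst ip_sym) (rule ADJ_iter)
  ultimately show ?thesis by (simp add: ip_sym)
qed

lemma W_props:
  "LINr N N (Wop N s) \<and> RESP N N (Wop N s) \<and> POS N N (Wop N s)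
   \<and> TRI N N (Wop N s) (\<lambda>n. lamD N s n * lamU N s n)"
proof -
  have U: "LINr (N + s) N (UU N s)" "RESP (N + s) N (UU N s)" "POS (N + s) N (UU N s)" "TRI (N + s) N (UU N s) (lamU N s)"
    using UU_props[of N s] by auto
  have D: "LINr N (N + s) (DD N s)" "RESP N (N + s) (DD N s)" "POS N (N + s) (DD N s)" "TRI N (N + s) (DD N s) (lamD N s)"
    using DD_props[of N s] by auto
  have e: "Wop N s = (\<lambda>f. UU N s (DD N s f))" unfolding Wop_def by (simp add: fun_eq_iff)
  show ?thesis unfolding e
    using comp_LINr[OF D(1) U(1) U(2)] comp_RESP[OF D(2) U(2)] comp_POS[OF D(3) U(3)]
      comp_TRI[OF D(4) U(4) U(1) U(2)] by simp
qed

lemma W_sa: "ip d \<alpha> N (Wop N s f) g = ip d \<alpha> N f (Wop N s g)"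
proof -
  have "ip d \<alpha> N (Wop N s f) g = ip d \<alpha> (N + s) (DD N s g) (DD N s f)"
    unfolding Wop_def by (subst ip_sym) (rule ADJ_iter[symmetric])
  moreover have "ip d \<alpha> N f (Wop N s g) = ip d \<alpha> (N + s) (DD N s f) (DD N s g)"
    unfolding Wop_def by (rule ADJ_iter[symmetric])
  ultimately show ?thesis by (simp add: ip_sym)
qed

lemma first_hpds:
  assumes mN: "m \<le> N"
  shows "HPDS d \<alpha> N (\<lambda>n. falling (real m) n / pochhammer (AA + real m) n
                         * (pochhammer (AA + real N) n / falling (real N) n))"
proof -
  obtain t where Nt: "N = m + t" using mN le_Suc_ex by blast
  have Zp: "LINr N N (Zop m t)" "RESP N N (Zop m t)" "POS N N (Zop m t)"
     "TRI N N (Zop m t) (\<lambda>n. lamU m t n * lamD m t n)" using Z_props[of m t] Nt by auto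
  have sa: "\<And>f g. ip d \<alpha> N (Zop m t f) g = ip d \<alpha> N f (Zop m t g)" using Z_sa Nt by simp
  show ?thesis
  proof (rule hpds_op2[OF Zp(1-3)])
    fix n P assume n: "n \<le> N" and P: "P \<in> orth_polys d \<alpha> N n"
    have ev: "lamU m t n * lamD m t n = falling (real m) n / pochhammer (AA + real m) n
                         * (pochhammer (AA + real N) n / falling (real N) n)"
    proof -
      have fN: "0 < falling (real N) n" using n by (rule falling_pos)
      have "lamD m t n * falling (real N) n = falling (real m) n" using lamD_eq[of m t n] Nt by simp
      then have "lamD m t n = falling (real m) n / falling (real N) n" using fN by (simp add: field_simps)
      then show ?thesis unfolding lamU_eq using Nt by simp
    qed
    show "\<forall>r\<in>S N. Zop m t P r = falling (real m) n / pochhammer (AA + real m) n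
                         * (pochhammer (AA + real N) n / falling (real N) n) * P r"
      using eig_tri[OF Zp(1,2,4) sa P] unfolding ev .
  qed simp
qed

lemma second_approx:
  assumes mN: "m \<le> N"
  shows "HPDS d \<alpha> N (\<lambda>n. falling (real m) n / pochhammer (AA + real m) n
                         * (pochhammer (AA + real (N + s)) n / falling (real (N + s)) n))"
proof -
  obtain t where Nt: "N = m + t" using mN le_Suc_ex by blast
  have Zp: "LINr N N (Zop m t)" "RESP N N (Zop m t)" "POS N N (Zop m t)"
     "TRI N N (Zop m t) (\<lambda>n. lamU m t n * lamD m t n)" using Z_props[of m t] Nt by auto
  have saZ: "\<And>f g. ip d \<alpha> N (Zop m t f) g = ip d \<alpha> N f (Zop m t g)" using Z_sa Nt by simp
  have Wp: "LINr N N (Wop N s)" "RESP N N (Wop N s)" "POS N N (Wop N s)"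
     "TRI N N (Wop N s) (\<lambda>n. lamD N s n * lamU N s n)" using W_props[of N s] by auto
  have saW: "\<And>f g. ip d \<alpha> N (Wop N s f) g = ip d \<alpha> N f (Wop N s g)" by (rule W_sa)
  have L: "LINr N N (\<lambda>f. Zop m t (Wop N s f))" by (rule comp_LINr[OF Wp(1) Zp(1) Zp(2)])
  have R: "RESP N N (\<lambda>f. Zop m t (Wop N s f))" by (rule comp_RESP[OF Wp(2) Zp(2)])
  have Po: "POS N N (\<lambda>f. Zop m t (Wop N s f))" by (rule comp_POS[OF Wp(3) Zp(3)])
  show ?thesis
  proof (rule hpds_op2[OF L R Po])
    fix n P assume n: "n \<le> N" and P: "P \<in> orth_polys d \<alpha> N n"
    define lz where "lz = lamU m t n * lamD m t n"
    define lw where "lw = lamD N s n * lamU N s n"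
    have eZ: "\<forall>r\<in>S N. Zop m t P r = lz * P r" unfolding lz_def by (rule eig_tri[OF Zp(1,2,4) saZ P])
    have eW: "\<forall>r\<in>S N. Wop N s P r = lw * P r" unfolding lw_def by (rule eig_tri[OF Wp(1,2,4) saW P])
    have ev: "lw * lz = falling (real m) n / pochhammer (AA + real m) n
                         * (pochhammer (AA + real (N + s)) n / falling (real (N + s)) n)"
    proof -
      have fN: "0 < falling (real N) n" using n by (rule falling_pos)
      have fNs: "0 < falling (real (N + s)) n" using n by (intro falling_pos) simp
      have pN: "0 < pochhammer (AA + real N) n" using AA_pos by (intro pochhammer_pos) simp
      have pm: "0 < pochhammer (AA + real m) n" using AA_pos by (intro pochhammer_pos) simp
      have "lamD m t n * falling (real N) n = falling (real m) n" using lamD_eq[of m t n] Nt by simp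
      then have d1: "lamD m t n = falling (real m) n / falling (real N) n" using fN by (simp add: field_simps)
      have "lamD N s n * falling (real (N + s)) n = falling (real N) n" using lamD_eq[of N s n] by simp
      then have d2: "lamD N s n = falling (real N) n / falling (real (N + s)) n" using fNs by (simp add: field_simps)
      have u1: "lamU m t n = pochhammer (AA + real N) n / pochhammer (AA + real m) n" unfolding lamU_eq using Nt by simp
      have u2: "lamU N s n = pochhammer (AA + real (N + s)) n / pochhammer (AA + real N) n" unfolding lamU_eq ..
      show ?thesis unfolding lw_def lz_def d1 d2 u1 u2 using fN pN pm fNs by (simp add: field_simps)
    qed
    show "\<forall>r\<in>S N. Zop m t (Wop N s P) r = falling (real m) n / pochhammer (AA + real m) n
                         * (pochhammer (AA + real (N + s)) n / falling (real (N + s)) n) * P r"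
    proof
      fix r assume r: "r \<in> S N"
      have "Zop m t (Wop N s P) r = Zop m t (\<lambda>x. lw * P x) r" by (rule RESP_D[OF Zp(2) eW r])
      also have "\<dots> = lw * Zop m t P r" by (rule LINr_scale[OF Zp(1) r])
      also have "\<dots> = lw * lz * P r" using eZ r by simp
      finally show "Zop m t (Wop N s P) r = falling (real m) n / pochhammer (AA + real m) n
                         * (pochhammer (AA + real (N + s)) n / falling (real (N + s)) n) * P r"
        unfolding ev .
    qed
  qed simp
qed

end

context hs begin

lemma ratio_lim:
  assumes n: "n \<le> N"
  shows "(\<lambda>s. pochhammer (AA + real (N + s)) n / falling (real (N + s)) n) \<longlonglongrightarrow> 1"
proof -
  have e: "pochhammer (AA + real (N + s)) n / falling (real (N + s)) n
      = (\<Prod>i<n. ((AA + real N + real i) + real s) / ((real N - real i) + real s))" for s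
    unfolding pochhammer_prod falling_def atLeast0LessThan prod_dividef[symmetric]
    by (intro prod.cong refl) (simp add: algebra_simps)
  have "(\<lambda>s. \<Prod>i<n. ((AA + real N + real i) + real s) / ((real N - real i) + real s)) \<longlonglongrightarrow> (\<Prod>i<n. 1)"
  proof (rule tendsto_prod)
    fix i assume "i \<in> {..<n}"
    then have "0 < real N - real i" using n by simp
    then show "(\<lambda>s. ((AA + real N + real i) + real s) / ((real N - real i) + real s)) \<longlonglongrightarrow> 1"
      by (rule lim_ratio)
  qed
  then show ?thesis unfolding e by simp
qed

lemma second_hpds:
  assumes mN: "m \<le> N"
  shows "HPDS d \<alpha> N (\<lambda>n. falling (real m) n / pochhammer (AA + real m) n)"
  unfolding HPDS_def
proof (intro conjI ballI)
  show "falling (real m) 0 / pochhammer (AA + real m) 0 = 1" by simp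
next
  fix r s assume r: "r \<in> S N" and s: "s \<in> S N"
  define X where "X t = (\<Sum>n\<le>N. falling (real m) n / pochhammer (AA + real m) n
      * (pochhammer (AA + real (N + t)) n / falling (real (N + t)) n) * hahn_kernel d \<alpha> N n r s)" for t
  have X0: "0 \<le> X t" for t
    using second_approx[OF mN, of t] r s unfolding HPDS_def X_def by blast
  have "X \<longlonglongrightarrow> (\<Sum>n\<le>N. falling (real m) n / pochhammer (AA + real m) n * 1 * hahn_kernel d \<alpha> N n r s)"
    unfolding X_def
  proof (intro tendsto_sum tendsto_mult tendsto_const)
    fix n assume "n \<in> {..N}"
    then show "(\<lambda>t. pochhammer (AA + real (N + t)) n / falling (real (N + t)) n) \<longlonglongrightarrow> 1"
      by (intro ratio_lim) simp
  qed
  then have "0 \<le> (\<Sum>n\<le>N. falling (real m) n / pochhammer (AA + real m) n * 1 * hahn_kernel d \<alpha> N n r s)"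
    using X0 by (intro LIMSEQ_le_const) auto
  then show "0 \<le> (\<Sum>n\<le>N. falling (real m) n / pochhammer (AA + real m) n * hahn_kernel d \<alpha> N n r s)"
    by simp
qed

end

theorem lemma7p6:
  fixes d N m :: nat and \<alpha> :: "nat \<Rightarrow> real"
  assumes "d \<ge> 2" and "\<forall>i<d. \<alpha> i > 0" and "m \<le> N"
  shows "HPDS d \<alpha> N (\<lambda>n. falling (real m) n / pochhammer (abs_alpha d \<alpha> + real m) n
                         * (pochhammer (abs_alpha d \<alpha> + real N) n / falling (real N) n))
       \<and> HPDS d \<alpha> N (\<lambda>n. falling (real m) n / pochhammer (abs_alpha d \<alpha> + real m) n)"
proof -
  interpret hs d \<alpha> using assms(1,2) by unfold_locales auto
  show ?thesis using first_hpds[OF assms(3)] second_hpds[OF assms(3)] by simp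
qed

end
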